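(* If a pair $(\mathfrak m,\mathfrak m^* )$ of functions $E\to\mathbb C$ on the edges of the lattice strip is imaginary complexified s-holomorphic (ICSH), then the Clifford-generator-valued discrete 1-form $\mathfrak m(z)\psi(z)\,dz+\mathfrak m^*(z)\psi^*(z)\,d\bar z$ is closed.
   Context: Fix integers $a<0<b$, $C=\{a,\dots,b\}$, $C^*=\{a+\frac12,\dots,b-\frac12\}$. $\tilde V$ has orthonormal basis $(e_\rho)_{\rho\in\{\pm1\}^C}$. For $x'\in C^*$, $\varsigma_{x'}(\rho)$ is $\rho$ with the signs of $\rho_x$, $x<x'$, flipped; $\psi_{x'}e_\rho=\frac{-\rho_{x'-1/2}+i\rho_{x'+1/2}}{\sqrt2}e_{\varsigma_{x'}(\rho)}$, $\psi^*_{x'}e_\rho=\frac{-i\rho_{x'-1/2}+\rho_{x'+1/2}}{\sqrt2}e_{\varsigma_{x'}(\rho)}$; $\mathrm{CliffGen}$ is their complex span. With $\beta=\frac12\log(\sqrt2+1)$: $T_h^{1/2}$ diagonal with entries $\exp(\frac\beta2\sum_{x=a}^{b-1}\rho_x\rho_{x+1})$, $e_\tau^\dagger T_ve_\rho=\exp(\beta\sum_{x=a}^b\rho_x\tau_x)\delta_{\tau_a\rho_a}\delta_{\tau_b\rho_b}$, $T=T_h^{1/2}T_vT_h^{1/2}$ (invertible). The lattice strip has vertices $C\times\mathbb Z\subset\mathbb C$, nearest-neighbour edges $E$ identified with their midpoints (horizontal $x'+iy$, vertical $x+iy'$, $y'\in\mathbb Z+\frac12$), faces with centres $p$; vertical edges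 with $x=a$ ($x=b$) are left (right) boundary edges. The fermions $\psi,\psi^*:E\to\mathrm{CliffGen}$ are the unique functions with $\psi(x'+iy)=T^{-y}\psi_{x'}T^y$, $\psi^*(x'+iy)=T^{-y}\psi^*_{x'}T^y$ on horizontal edges such that for any edges $z_1,z_2$ adjacent to a common vertex $v$ and face $p$, $\psi(z_1)+\frac{i|v-p|}{v-p}\psi^*(z_1)=\psi(z_2)+\frac{i|v-p|}{v-p}\psi^*(z_2)$, and $\psi(L)+i\psi^*(L)=0$, $\psi(R)-i\psi^*(R)=0$ on left/right boundary edges $L,R$. For a discrete contour $\gamma=(w_0,\dots,w_m)$ of vertices with $z_j$ the edge joining $w_{j-1},w_j$, define $\int_\gamma(\mathfrak m\psi\,dz+\mathfrak m^*\psi^*\,d\bar z)=\sum_{j=1}^m\big(\mathfrak m(z_j)\psi(z_j)(w_j-w_{j-1})+\mathfrak m^*(z_j)\psi^*(z_j)\overline{(w_j-w_{j-1})}\big)$. The form is closed if this integral vanishes for every counterclockwise plaquette contour $(w_0,w_1,w_2,w_3,w_4=w_0)$ around a face. The pair $(\mathfrak m,\mathfrak m^* )$ is ICSH if for any edges $z_1,z_2$ adjacent to a common vertex $v$ and face $p$: $\mathfrak m(z_1)-\frac{i|v-p|}{v-p}\mathfrak m^*(z_1)=\mathfrak m(z_2)-\frac{i|v-p|}{v-p}\mathfrak m^*(z_2)$. *)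

theory Defs
  imports Complex_Main
begin

text \<open>A spin configuration \<rho> \<in> {+1,-1}^C, C = {a..b}, is represented as a function
  int \<Rightarrow> int with values \<plusminus>1 on C and the value 1 outside C (canonical representative).
  An operator on the space with orthonormal basis (e_\<rho>) is represented by its matrix:
  A \<tau> \<rho> = e_\<tau>^dagger A e_\<rho>; entries vanish outside the configuration set.\<close>

type_synonym spin = "int \<Rightarrow> int"
type_synonym op = "spin \<Rightarrow> spin \<Rightarrow> complex"

definition Conf :: "int \<Rightarrow> int \<Rightarrow> spin set" where
  "Conf a b = {\<rho>. (\<forall>x. a \<le> x \<and> x \<le> b \<longrightarrow> \<rho> x = 1 \<or> \<rho> x = -1)
                 \<and> (\<forall>x. \<not> (a \<le> x \<and> x \<le> b) \<longrightarrow> \<rho> x = 1)}"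

definition is_op :: "int \<Rightarrow> int \<Rightarrow> op \<Rightarrow> bool" where
  "is_op a b A \<longleftrightarrow> (\<forall>\<tau> \<rho>. \<tau> \<notin> Conf a b \<or> \<rho> \<notin> Conf a b \<longrightarrow> A \<tau> \<rho> = 0)"

definition op_zero :: op where "op_zero = (\<lambda>\<tau> \<rho>. 0)"

definition op_add :: "op \<Rightarrow> op \<Rightarrow> op" where
  "op_add A B = (\<lambda>\<tau> \<rho>. A \<tau> \<rho> + B \<tau> \<rho>)"

definition op_scale :: "complex \<Rightarrow> op \<Rightarrow> op" where
  "op_scale c A = (\<lambda>\<tau> \<rho>. c * A \<tau> \<rho>)"

definition op_mult :: "int \<Rightarrow> int \<Rightarrow> op \<Rightarrow> op \<Rightarrow> op" where
  "op_mult a b A B = (\<lambda>\<tau> \<rho>. \<Sum>\<sigma>\<in>Conf a b. A \<tau> \<sigma> * B \<sigma> \<rho>)"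

definition op_id :: "int \<Rightarrow> int \<Rightarrow> op" where
  "op_id a b = (\<lambda>\<tau> \<rho>. if \<tau> = \<rho> \<and> \<rho> \<in> Conf a b then 1 else 0)"

fun op_pow :: "int \<Rightarrow> int \<Rightarrow> op \<Rightarrow> nat \<Rightarrow> op" where
  "op_pow a b A 0 = op_id a b"
| "op_pow a b A (Suc n) = op_mult a b A (op_pow a b A n)"

definition op_inv :: "int \<Rightarrow> int \<Rightarrow> op \<Rightarrow> op" where
  "op_inv a b A = (THE B. is_op a b B \<and> op_mult a b A B = op_id a b \<and> op_mult a b B A = op_id a b)"

definition op_zpow :: "int \<Rightarrow> int \<Rightarrow> op \<Rightarrow> int \<Rightarrow> op" where
  "op_zpow a b A y = (if 0 \<le> y then op_pow a b A (nat y) else op_pow a b (op_inv a b A) (nat (- y)))"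

text \<open>The half-integer x' = k + 1/2 \<in> C* (a \<le> k < b) is indexed by the integer k.
  flip a k \<rho> = \<varsigma>_{x'}(\<rho>): the signs of \<rho>_x for x < x' (i.e. a \<le> x \<le> k) are flipped.\<close>

definition flip :: "int \<Rightarrow> int \<Rightarrow> spin \<Rightarrow> spin" where
  "flip a k \<rho> = (\<lambda>x. if a \<le> x \<and> x \<le> k then - \<rho> x else \<rho> x)"

definition psi_gen :: "int \<Rightarrow> int \<Rightarrow> int \<Rightarrow> op" where
  "psi_gen a b k = (\<lambda>\<tau> \<rho>. if \<rho> \<in> Conf a b \<and> \<tau> = flip a k \<rho>
      then (- of_int (\<rho> k) + \<i> * of_int (\<rho> (k + 1))) / complex_of_real (sqrt 2) else 0)"

definition psis_gen :: "int \<Rightarrow> int \<Rightarrow> int \<Rightarrow> op" where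
  "psis_gen a b k = (\<lambda>\<tau> \<rho>. if \<rho> \<in> Conf a b \<and> \<tau> = flip a k \<rho>
      then (- \<i> * of_int (\<rho> k) + of_int (\<rho> (k + 1))) / complex_of_real (sqrt 2) else 0)"

definition CliffGen :: "int \<Rightarrow> int \<Rightarrow> op set" where
  "CliffGen a b = {A. \<exists>\<alpha> \<beta> :: int \<Rightarrow> complex.
      A = (\<lambda>\<tau> \<rho>. \<Sum>k\<in>{a..<b}. \<alpha> k * psi_gen a b k \<tau> \<rho> + \<beta> k * psis_gen a b k \<tau> \<rho>)}"

definition beta_c :: real where "beta_c = ln (sqrt 2 + 1) / 2"

definition Th_half :: "int \<Rightarrow> int \<Rightarrow> op" where
  "Th_half a b = (\<lambda>\<tau> \<rho>. if \<tau> = \<rho> \<and> \<rho> \<in> Conf a b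
      then complex_of_real (exp (beta_c / 2 * (\<Sum>x\<in>{a..<b}. of_int (\<rho> x * \<rho> (x + 1))))) else 0)"

definition Tv :: "int \<Rightarrow> int \<Rightarrow> op" where
  "Tv a b = (\<lambda>\<tau> \<rho>. if \<tau> \<in> Conf a b \<and> \<rho> \<in> Conf a b \<and> \<tau> a = \<rho> a \<and> \<tau> b = \<rho> b
      then complex_of_real (exp (beta_c * (\<Sum>x\<in>{a..b}. of_int (\<rho> x * \<tau> x)))) else 0)"

definition Tmat :: "int \<Rightarrow> int \<Rightarrow> op" where
  "Tmat a b = op_mult a b (op_mult a b (Th_half a b) (Tv a b)) (Th_half a b)"

definition vertex :: "int \<Rightarrow> int \<Rightarrow> complex \<Rightarrow> bool" where
  "vertex a b v \<longleftrightarrow> (\<exists>x y::int. a \<le> x \<and> x \<le> b \<and> v = Complex (of_int x) (of_int y))"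

definition hedge :: "int \<Rightarrow> int \<Rightarrow> complex \<Rightarrow> bool" where
  "hedge a b z \<longleftrightarrow> (\<exists>k y::int. a \<le> k \<and> k < b \<and> z = Complex (of_int k + 1/2) (of_int y))"

definition vedge :: "int \<Rightarrow> int \<Rightarrow> complex \<Rightarrow> bool" where
  "vedge a b z \<longleftrightarrow> (\<exists>x y::int. a \<le> x \<and> x \<le> b \<and> z = Complex (of_int x) (of_int y + 1/2))"

definition edge :: "int \<Rightarrow> int \<Rightarrow> complex \<Rightarrow> bool" where
  "edge a b z \<longleftrightarrow> hedge a b z \<or> vedge a b z"

definition face :: "int \<Rightarrow> int \<Rightarrow> complex \<Rightarrow> bool" where
  "face a b p \<longleftrightarrow> (\<exists>k y::int. a \<le> k \<and> k < b \<and> p = Complex (of_int k + 1/2) (of_int y + 1/2))"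

text \<open>Edges z1, z2 both adjacent to a common vertex v and a common face p
  (an edge is adjacent to a vertex / face iff its midpoint is at distance 1/2).\<close>
definition corner_pair :: "int \<Rightarrow> int \<Rightarrow> complex \<Rightarrow> complex \<Rightarrow> complex \<Rightarrow> complex \<Rightarrow> bool" where
  "corner_pair a b z1 z2 v p \<longleftrightarrow> edge a b z1 \<and> edge a b z2 \<and> vertex a b v \<and> face a b p
     \<and> cmod (z1 - v) = 1/2 \<and> cmod (z2 - v) = 1/2 \<and> cmod (z1 - p) = 1/2 \<and> cmod (z2 - p) = 1/2"

definition fermion_conds :: "int \<Rightarrow> int \<Rightarrow> (complex \<Rightarrow> op) \<Rightarrow> (complex \<Rightarrow> op) \<Rightarrow> bool" where
  "fermion_conds a b \<psi> \<psi>s \<longleftrightarrow>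
     (\<forall>z. \<not> edge a b z \<longrightarrow> \<psi> z = op_zero \<and> \<psi>s z = op_zero)
   \<and> (\<forall>z. edge a b z \<longrightarrow> \<psi> z \<in> CliffGen a b \<and> \<psi>s z \<in> CliffGen a b)
   \<and> (\<forall>k y::int. a \<le> k \<and> k < b \<longrightarrow>
        \<psi> (Complex (of_int k + 1/2) (of_int y)) =
          op_mult a b (op_zpow a b (Tmat a b) (- y)) (op_mult a b (psi_gen a b k) (op_zpow a b (Tmat a b) y))
      \<and> \<psi>s (Complex (of_int k + 1/2) (of_int y)) =
          op_mult a b (op_zpow a b (Tmat a b) (- y)) (op_mult a b (psis_gen a b k) (op_zpow a b (Tmat a b) y)))
   \<and> (\<forall>z1 z2 v p. corner_pair a b z1 z2 v p \<longrightarrow>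
        op_add (\<psi> z1) (op_scale (\<i> * of_real (cmod (v - p)) / (v - p)) (\<psi>s z1)) =
        op_add (\<psi> z2) (op_scale (\<i> * of_real (cmod (v - p)) / (v - p)) (\<psi>s z2)))
   \<and> (\<forall>y::int. op_add (\<psi> (Complex (of_int a) (of_int y + 1/2)))
                      (op_scale \<i> (\<psi>s (Complex (of_int a) (of_int y + 1/2)))) = op_zero)
   \<and> (\<forall>y::int. op_add (\<psi> (Complex (of_int b) (of_int y + 1/2)))
                      (op_scale (- \<i>) (\<psi>s (Complex (of_int b) (of_int y + 1/2)))) = op_zero)"

text \<open>The fermions (\<psi>, \<psi>*) : E \<rightarrow> CliffGen, extended by 0 off E so that they are unique as HOL functions.\<close>
definition fermions :: "int \<Rightarrow> int \<Rightarrow> (complex \<Rightarrow> op) \<times> (complex \<Rightarrow> op)" where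
  "fermions a b = (THE fg. fermion_conds a b (fst fg) (snd fg))"

definition ICSH :: "int \<Rightarrow> int \<Rightarrow> (complex \<Rightarrow> complex) \<Rightarrow> (complex \<Rightarrow> complex) \<Rightarrow> bool" where
  "ICSH a b m ms \<longleftrightarrow> (\<forall>z1 z2 v p. corner_pair a b z1 z2 v p \<longrightarrow>
      m z1 - \<i> * of_real (cmod (v - p)) / (v - p) * ms z1 =
      m z2 - \<i> * of_real (cmod (v - p)) / (v - p) * ms z2)"

text \<open>Counterclockwise plaquette contour around face centre p, starting at corner number r:
  w_j = p - (1+i)/2 * i^(j+r), j = 0..4 (w_4 = w_0); z_j is the midpoint of w_{j-1}, w_j.\<close>
definition plaq_w :: "complex \<Rightarrow> nat \<Rightarrow> nat \<Rightarrow> complex" where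
  "plaq_w p r j = p - (1 + \<i>) / 2 * \<i> ^ (j + r)"

definition plaq_z :: "complex \<Rightarrow> nat \<Rightarrow> nat \<Rightarrow> complex" where
  "plaq_z p r j = (plaq_w p r (j - 1) + plaq_w p r j) / 2"

definition plaquette_integral ::
  "(complex \<Rightarrow> complex) \<Rightarrow> (complex \<Rightarrow> complex) \<Rightarrow> (complex \<Rightarrow> op) \<Rightarrow> (complex \<Rightarrow> op) \<Rightarrow> complex \<Rightarrow> nat \<Rightarrow> op" where
  "plaquette_integral m ms \<psi> \<psi>s p r = (\<lambda>\<tau> \<rho>. \<Sum>j\<in>{1..4::nat}.
      m (plaq_z p r j) * \<psi> (plaq_z p r j) \<tau> \<rho> * (plaq_w p r j - plaq_w p r (j - 1))
    + ms (plaq_z p r j) * \<psi>s (plaq_z p r j) \<tau> \<rho> * cnj (plaq_w p r j - plaq_w p r (j - 1)))"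

definition closed_form :: "int \<Rightarrow> int \<Rightarrow> (complex \<Rightarrow> complex) \<Rightarrow> (complex \<Rightarrow> complex) \<Rightarrow> (complex \<Rightarrow> op) \<Rightarrow> (complex \<Rightarrow> op) \<Rightarrow> bool" where
  "closed_form a b m ms \<psi> \<psi>s \<longleftrightarrow>
     (\<forall>p r. face a b p \<and> r < 4 \<longrightarrow> plaquette_integral m ms \<psi> \<psi>s p r = op_zero)"

end

theory Submission
  imports Defs "HOL-Library.FuncSet"
begin


lemma Conf_val: "\<rho> \<in> Conf a b \<Longrightarrow> \<rho> x = 1 \<or> \<rho> x = -1"
  unfolding Conf_def by (cases "a \<le> x \<and> x \<le> b") auto

lemma Conf_sq: "\<rho> \<in> Conf a b \<Longrightarrow> \<rho> x * \<rho> x = 1"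
  using Conf_val[of \<rho> a b x] by auto

lemma flip_flip[simp]: "flip a k (flip a k \<rho>) = \<rho>"
  unfolding flip_def by auto

lemma flip_Conf[simp]: "k \<le> b \<Longrightarrow> flip a k \<rho> \<in> Conf a b \<longleftrightarrow> \<rho> \<in> Conf a b"
  unfolding flip_def Conf_def by (auto; smt)

lemma finite_Conf[simp]: "finite (Conf a b)"
proof -
  let ?E = "\<lambda>f::int\<Rightarrow>int. \<lambda>x. if x \<in> {a..b} then f x else 1"
  have "Conf a b \<subseteq> ?E ` (PiE {a..b} (\<lambda>_. {1,-1}))"
  proof
    fix \<rho> assume r: "\<rho> \<in> Conf a b"
    have "restrict \<rho> {a..b} \<in> PiE {a..b} (\<lambda>_. {1,-1})" using r unfolding Conf_def by auto
    moreover have "\<rho> = ?E (restrict \<rho> {a..b})" using r unfolding Conf_def by (auto simp: fun_eq_iff)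
    ultimately show "\<rho> \<in> ?E ` (PiE {a..b} (\<lambda>_. {1,-1}))" by blast
  qed
  moreover have "finite (PiE {a..b} (\<lambda>_::int. {1::int,-1}))" by (rule finite_PiE) auto
  ultimately show ?thesis by (rule finite_subset[OF _ finite_imageI])
qed

lemma op_mult_assoc: "op_mult a b (op_mult a b X Y) Z = op_mult a b X (op_mult a b Y Z)"
  unfolding op_mult_def
  by (auto simp: fun_eq_iff sum_distrib_left sum_distrib_right mult.assoc intro: sum.swap)

lemma is_op_mult: "is_op a b X \<Longrightarrow> is_op a b Y \<Longrightarrow> is_op a b (op_mult a b X Y)"
  unfolding is_op_def op_mult_def by auto

lemma op_id_left: assumes "is_op a b X" shows "op_mult a b (op_id a b) X = X"
proof (intro ext)
  fix \<tau> \<rho>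
  have "op_mult a b (op_id a b) X \<tau> \<rho> = (\<Sum>\<sigma>\<in>Conf a b. if \<sigma> = \<tau> then X \<sigma> \<rho> else 0)"
    unfolding op_mult_def op_id_def by (rule sum.cong) auto
  also have "\<dots> = X \<tau> \<rho>" using assms unfolding is_op_def by (auto simp: sum.delta)
  finally show "op_mult a b (op_id a b) X \<tau> \<rho> = X \<tau> \<rho>" .
qed

lemma op_id_right: assumes "is_op a b X" shows "op_mult a b X (op_id a b) = X"
proof (intro ext)
  fix \<tau> \<rho>
  have "op_mult a b X (op_id a b) \<tau> \<rho> = (\<Sum>\<sigma>\<in>Conf a b. if \<sigma> = \<rho> then X \<tau> \<sigma> else 0)"
    unfolding op_mult_def op_id_def by (rule sum.cong) auto
  also have "\<dots> = X \<tau> \<rho>" using assms unfolding is_op_def by (auto simp: sum.delta')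
  finally show "op_mult a b X (op_id a b) \<tau> \<rho> = X \<tau> \<rho>" .
qed

lemma is_op_id: "is_op a b (op_id a b)"
  unfolding is_op_def op_id_def by auto


definition Aop :: "int \<Rightarrow> int \<Rightarrow> int \<Rightarrow> op" where
  "Aop a b k = (\<lambda>\<tau> \<rho>. if \<rho> \<in> Conf a b \<and> \<tau> = flip a k \<rho> then of_int (\<rho> k) else 0)"
definition Bop :: "int \<Rightarrow> int \<Rightarrow> int \<Rightarrow> op" where
  "Bop a b k = (\<lambda>\<tau> \<rho>. if \<rho> \<in> Conf a b \<and> \<tau> = flip a k \<rho> then of_int (\<rho> (k+1)) else 0)"

lemma mult_gen_left:
  assumes "k \<le> b"
  shows "op_mult a b (\<lambda>\<tau> \<rho>. if \<rho> \<in> Conf a b \<and> \<tau> = flip a k \<rho> then c \<rho> else 0) M \<tau> \<rho>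
       = (if \<tau> \<in> Conf a b then c (flip a k \<tau>) * M (flip a k \<tau>) \<rho> else 0)"
proof -
  have "op_mult a b (\<lambda>\<tau> \<rho>. if \<rho> \<in> Conf a b \<and> \<tau> = flip a k \<rho> then c \<rho> else 0) M \<tau> \<rho>
      = (\<Sum>\<sigma>\<in>Conf a b. if \<sigma> = flip a k \<tau> then c \<sigma> * M \<sigma> \<rho> else 0)"
    unfolding op_mult_def by (rule sum.cong) auto
  also have "\<dots> = (if \<tau> \<in> Conf a b then c (flip a k \<tau>) * M (flip a k \<tau>) \<rho> else 0)"
    using assms by (simp add: sum.delta')
  finally show ?thesis .
qed

lemma mult_gen_right:
  assumes "k \<le> b"
  shows "op_mult a b M (\<lambda>\<tau> \<rho>. if \<rho> \<in> Conf a b \<and> \<tau> = flip a k \<rho> then c \<rho> else 0) \<tau> \<rho>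
       = (if \<rho> \<in> Conf a b then M \<tau> (flip a k \<rho>) * c \<rho> else 0)"
proof -
  have "op_mult a b M (\<lambda>\<tau> \<rho>. if \<rho> \<in> Conf a b \<and> \<tau> = flip a k \<rho> then c \<rho> else 0) \<tau> \<rho>
      = (\<Sum>\<sigma>\<in>Conf a b. if \<sigma> = flip a k \<rho> then (if \<rho> \<in> Conf a b then M \<tau> \<sigma> * c \<rho> else 0) else 0)"
    unfolding op_mult_def by (rule sum.cong) auto
  also have "\<dots> = (if \<rho> \<in> Conf a b then M \<tau> (flip a k \<rho>) * c \<rho> else 0)"
    using assms by (auto simp add: sum.delta')
  finally show ?thesis .
qed


definition lc :: "int \<Rightarrow> int \<Rightarrow> (int \<Rightarrow> complex) \<Rightarrow> (int \<Rightarrow> complex) \<Rightarrow> op" where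
  "lc a b \<alpha> \<beta> = (\<lambda>\<tau> \<rho>. \<Sum>j\<in>{a..<b}. \<alpha> j * Aop a b j \<tau> \<rho> + \<beta> j * Bop a b j \<tau> \<rho>)"

lemma lc_mult_left: "op_mult a b (lc a b \<alpha> \<beta>) M \<tau> \<rho>
   = (\<Sum>j\<in>{a..<b}. \<alpha> j * op_mult a b (Aop a b j) M \<tau> \<rho> + \<beta> j * op_mult a b (Bop a b j) M \<tau> \<rho>)"
  unfolding op_mult_def lc_def
  by (simp add: sum_distrib_left sum_distrib_right sum.distrib[symmetric] algebra_simps sum.swap[of _ "{a..<b}"])

lemma lc_mult_right: "op_mult a b M (lc a b \<alpha> \<beta>) \<tau> \<rho>
   = (\<Sum>j\<in>{a..<b}. \<alpha> j * op_mult a b M (Aop a b j) \<tau> \<rho> + \<beta> j * op_mult a b M (Bop a b j) \<tau> \<rho>)"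
  unfolding op_mult_def lc_def
  by (simp add: sum_distrib_left sum_distrib_right sum.distrib[symmetric] algebra_simps sum.swap[of _ "{a..<b}"])

lemma linext:
  assumes A: "\<And>k \<tau> \<rho>. k \<in> {a..<b} \<Longrightarrow> op_mult a b (Aop a b k) M \<tau> \<rho>
        = (\<Sum>j\<in>{a..<b}. FA k j * op_mult a b N (Aop a b j) \<tau> \<rho> + FB k j * op_mult a b N (Bop a b j) \<tau> \<rho>)"
  and B: "\<And>k \<tau> \<rho>. k \<in> {a..<b} \<Longrightarrow> op_mult a b (Bop a b k) M \<tau> \<rho>
        = (\<Sum>j\<in>{a..<b}. GA k j * op_mult a b N (Aop a b j) \<tau> \<rho> + GB k j * op_mult a b N (Bop a b j) \<tau> \<rho>)"
  shows "op_mult a b (lc a b \<alpha> \<beta>) M = op_mult a b N (lc a b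
     (\<lambda>j. \<Sum>k\<in>{a..<b}. \<alpha> k * FA k j + \<beta> k * GA k j)
     (\<lambda>j. \<Sum>k\<in>{a..<b}. \<alpha> k * FB k j + \<beta> k * GB k j))"
proof (intro ext)
  fix \<tau> \<rho>
  let ?X = "\<lambda>j. op_mult a b N (Aop a b j) \<tau> \<rho>" and ?Y = "\<lambda>j. op_mult a b N (Bop a b j) \<tau> \<rho>"
  have "op_mult a b (lc a b \<alpha> \<beta>) M \<tau> \<rho> = (\<Sum>k\<in>{a..<b}. \<alpha> k * (\<Sum>j\<in>{a..<b}. FA k j * ?X j + FB k j * ?Y j)
        + \<beta> k * (\<Sum>j\<in>{a..<b}. GA k j * ?X j + GB k j * ?Y j))"
    unfolding lc_mult_left using A B by (intro sum.cong) auto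
  also have "\<dots> = (\<Sum>k\<in>{a..<b}. \<Sum>j\<in>{a..<b}. \<alpha> k * FA k j * ?X j + \<alpha> k * FB k j * ?Y j + \<beta> k * GA k j * ?X j + \<beta> k * GB k j * ?Y j)"
    by (simp add: sum_distrib_left sum.distrib[symmetric] algebra_simps)
  also have "\<dots> = (\<Sum>j\<in>{a..<b}. \<Sum>k\<in>{a..<b}. \<alpha> k * FA k j * ?X j + \<alpha> k * FB k j * ?Y j + \<beta> k * GA k j * ?X j + \<beta> k * GB k j * ?Y j)"
    by (rule sum.swap)
  also have "\<dots> = (\<Sum>j\<in>{a..<b}. (\<Sum>k\<in>{a..<b}. \<alpha> k * FA k j + \<beta> k * GA k j) * ?X j + (\<Sum>k\<in>{a..<b}. \<alpha> k * FB k j + \<beta> k * GB k j) * ?Y j)"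
    by (intro sum.cong refl) (simp add: sum_distrib_left sum_distrib_right sum.distrib algebra_simps)
  also have "\<dots> = op_mult a b N (lc a b
     (\<lambda>j. \<Sum>k\<in>{a..<b}. \<alpha> k * FA k j + \<beta> k * GA k j)
     (\<lambda>j. \<Sum>k\<in>{a..<b}. \<alpha> k * FB k j + \<beta> k * GB k j)) \<tau> \<rho>"
    unfolding lc_mult_right ..
  finally show "op_mult a b (lc a b \<alpha> \<beta>) M \<tau> \<rho> = op_mult a b N (lc a b
     (\<lambda>j. \<Sum>k\<in>{a..<b}. \<alpha> k * FA k j + \<beta> k * GA k j)
     (\<lambda>j. \<Sum>k\<in>{a..<b}. \<alpha> k * FB k j + \<beta> k * GB k j)) \<tau> \<rho>" .
qed

definition hf :: "int \<Rightarrow> int \<Rightarrow> spin \<Rightarrow> complex" where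
  "hf a b \<rho> = complex_of_real (exp (beta_c / 2 * (\<Sum>x\<in>{a..<b}. of_int (\<rho> x * \<rho> (x + 1)))))"

lemma Th_left: "op_mult a b (Th_half a b) X \<tau> \<rho> = (if \<tau> \<in> Conf a b then hf a b \<tau> * X \<tau> \<rho> else 0)"
proof -
  have "op_mult a b (Th_half a b) X \<tau> \<rho> = (\<Sum>\<sigma>\<in>Conf a b. if \<sigma> = \<tau> then (if \<tau> \<in> Conf a b then hf a b \<tau> * X \<tau> \<rho> else 0) else 0)"
    unfolding op_mult_def Th_half_def hf_def by (rule sum.cong) auto
  then show ?thesis by (simp add: sum.delta)
qed

lemma Th_right: "op_mult a b X (Th_half a b) \<tau> \<rho> = (if \<rho> \<in> Conf a b then X \<tau> \<rho> * hf a b \<rho> else 0)"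
proof -
  have "op_mult a b X (Th_half a b) \<tau> \<rho> = (\<Sum>\<sigma>\<in>Conf a b. if \<sigma> = \<rho> then (if \<rho> \<in> Conf a b then X \<tau> \<rho> * hf a b \<rho> else 0) else 0)"
    unfolding op_mult_def Th_half_def hf_def by (rule sum.cong) auto
  then show ?thesis by (simp add: sum.delta)
qed

lemma sum_change1:
  fixes f g :: "'c \<Rightarrow> 'd::ab_group_add"
  assumes "finite S" "k \<in> S" "\<And>x. x \<in> S \<Longrightarrow> x \<noteq> k \<Longrightarrow> g x = f x"
  shows "sum g S = sum f S + (g k - f k)"
proof -
  have "sum g S = g k + sum g (S - {k})" using assms by (simp add: sum.remove)
  also have "sum g (S - {k}) = sum f (S - {k})" using assms by (intro sum.cong) auto
  also have "sum f S = f k + sum f (S - {k})" using assms by (simp add: sum.remove)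
  ultimately show ?thesis by (simp add: algebra_simps)
qed

lemma hf_flip:
  assumes "a \<le> k" "k < b"
  shows "hf a b \<rho> = hf a b (flip a k \<rho>) * complex_of_real (exp (beta_c * of_int (\<rho> k * \<rho> (k+1))))"
proof -
  have "(\<Sum>x\<in>{a..<b}. real_of_int (\<rho> x * \<rho> (x + 1))) = (\<Sum>x\<in>{a..<b}. real_of_int (flip a k \<rho> x * flip a k \<rho> (x + 1)))
         + (real_of_int (\<rho> k * \<rho> (k + 1)) - real_of_int (flip a k \<rho> k * flip a k \<rho> (k + 1)))"
    using assms by (intro sum_change1) (auto simp: flip_def)
  also have "real_of_int (\<rho> k * \<rho> (k + 1)) - real_of_int (flip a k \<rho> k * flip a k \<rho> (k + 1)) = 2 * real_of_int (\<rho> k * \<rho> (k + 1))"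
    using assms by (simp add: flip_def)
  finally have e: "(\<Sum>x\<in>{a..<b}. real_of_int (\<rho> x * \<rho> (x + 1))) = (\<Sum>x\<in>{a..<b}. real_of_int (flip a k \<rho> x * flip a k \<rho> (x + 1))) + 2 * real_of_int (\<rho> k * \<rho> (k + 1))" .
  show ?thesis unfolding hf_def e
    by (simp add: distrib_left exp_add mult.commute)
qed


definition chb :: real where "chb = (exp beta_c + exp (- beta_c)) / 2"
definition shb :: real where "shb = (exp beta_c - exp (- beta_c)) / 2"
abbreviation s2 :: complex where "s2 \<equiv> complex_of_real (sqrt 2)"

lemma ifz_mult: "(if P then c else 0) * (x::complex) = (if P then c * x else 0)" by simp

lemma exp_sign_ch_real:
  assumes "s = 1 \<or> s = -1" "t = 1 \<or> t = -1"
  shows "real_of_int s * exp (beta_c * of_int (s * t)) = chb * of_int s + shb * of_int t"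
  using assms unfolding chb_def shb_def
  by (elim disjE) (simp_all add: field_simps)

lemma exp_sign_ch: 
  assumes "s = 1 \<or> s = -1" "t = 1 \<or> t = -1"
  shows "complex_of_int s * complex_of_real (exp (beta_c * of_int (s * t)))
       = complex_of_real chb * of_int s + complex_of_real shb * of_int t"
proof -
  have "complex_of_real (real_of_int s * exp (beta_c * of_int (s * t))) = complex_of_real (chb * of_int s + shb * of_int t)"
    using exp_sign_ch_real[OF assms] by simp
  then show ?thesis by simp
qed

lemma Th_gen_right: "op_mult a b (\<lambda>\<tau> \<rho>. if \<rho> \<in> Conf a b \<and> \<tau> = flip a k \<rho> then c \<rho> else 0) (Th_half a b) \<tau> \<rho>
   = (if \<rho> \<in> Conf a b \<and> \<tau> = flip a k \<rho> then c \<rho> * hf a b \<rho> else 0)"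
  unfolding Th_right by auto

lemma Th_gen_left: "k \<le> b \<Longrightarrow> op_mult a b (Th_half a b) (\<lambda>\<tau> \<rho>. if \<rho> \<in> Conf a b \<and> \<tau> = flip a k \<rho> then c \<rho> else 0) \<tau> \<rho>
   = (if \<rho> \<in> Conf a b \<and> \<tau> = flip a k \<rho> then hf a b (flip a k \<rho>) * c \<rho> else 0)"
  unfolding Th_left by auto

lemma Th_vals:
  assumes "k < b"
  shows "op_mult a b (Aop a b k) (Th_half a b) \<tau> \<rho> = (if \<rho> \<in> Conf a b \<and> \<tau> = flip a k \<rho> then of_int (\<rho> k) * hf a b \<rho> else 0)"
    "op_mult a b (Bop a b k) (Th_half a b) \<tau> \<rho> = (if \<rho> \<in> Conf a b \<and> \<tau> = flip a k \<rho> then of_int (\<rho> (k+1)) * hf a b \<rho> else 0)"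
    "op_mult a b (Th_half a b) (Aop a b k) \<tau> \<rho> = (if \<rho> \<in> Conf a b \<and> \<tau> = flip a k \<rho> then hf a b (flip a k \<rho>) * of_int (\<rho> k) else 0)"
    "op_mult a b (Th_half a b) (Bop a b k) \<tau> \<rho> = (if \<rho> \<in> Conf a b \<and> \<tau> = flip a k \<rho> then hf a b (flip a k \<rho>) * of_int (\<rho> (k+1)) else 0)"
  unfolding Aop_def Bop_def using assms by (simp_all only: Th_gen_left Th_gen_right)

lemma Th_A:
  assumes "a \<le> k" "k < b"
  shows "op_mult a b (Aop a b k) (Th_half a b) \<tau> \<rho> =
     complex_of_real chb * op_mult a b (Th_half a b) (Aop a b k) \<tau> \<rho> + complex_of_real shb * op_mult a b (Th_half a b) (Bop a b k) \<tau> \<rho>"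
proof (cases "\<rho> \<in> Conf a b \<and> \<tau> = flip a k \<rho>")
  case True
  have "of_int (\<rho> k) * hf a b \<rho> = hf a b (flip a k \<rho>) * (of_int (\<rho> k) * complex_of_real (exp (beta_c * of_int (\<rho> k * \<rho> (k+1)))))"
    using hf_flip[OF assms, of \<rho>] by simp
  also have "\<dots> = hf a b (flip a k \<rho>) * (complex_of_real chb * of_int (\<rho> k) + complex_of_real shb * of_int (\<rho> (k+1)))"
    using exp_sign_ch[of "\<rho> k" "\<rho> (k+1)"] Conf_val[of \<rho> a b] True by simp
  finally show ?thesis unfolding Th_vals[OF assms(2)] using True
    by (simp add: algebra_simps)
next
  case False
  then show ?thesis unfolding Th_vals[OF assms(2)] by (simp only: if_not_P[OF False]) simp
qed

lemma Th_B:
  assumes "a \<le> k" "k < b"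
  shows "op_mult a b (Bop a b k) (Th_half a b) \<tau> \<rho> =
     complex_of_real shb * op_mult a b (Th_half a b) (Aop a b k) \<tau> \<rho> + complex_of_real chb * op_mult a b (Th_half a b) (Bop a b k) \<tau> \<rho>"
proof (cases "\<rho> \<in> Conf a b \<and> \<tau> = flip a k \<rho>")
  case True
  have "of_int (\<rho> (k+1)) * hf a b \<rho> = hf a b (flip a k \<rho>) * (of_int (\<rho> (k+1)) * complex_of_real (exp (beta_c * of_int (\<rho> (k+1) * \<rho> k))))"
    using hf_flip[OF assms, of \<rho>] by (simp add: mult.commute)
  also have "\<dots> = hf a b (flip a k \<rho>) * (complex_of_real chb * of_int (\<rho> (k+1)) + complex_of_real shb * of_int (\<rho> k))"
    using exp_sign_ch[of "\<rho> (k+1)" "\<rho> k"] Conf_val[of \<rho> a b] True by simp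
  finally show ?thesis unfolding Th_vals[OF assms(2)] using True
    by (simp add: algebra_simps)
next
  case False
  then show ?thesis unfolding Th_vals[OF assms(2)] by (simp only: if_not_P[OF False]) simp
qed


lemma exp2b: "exp (beta_c * 2) = sqrt 2 + 1"
proof -
  have "beta_c * 2 = ln (sqrt 2 + 1)" unfolding beta_c_def by simp
  moreover have "(0::real) < sqrt 2 + 1" by (simp add: add_pos_nonneg)
  ultimately show ?thesis by simp
qed

lemma exp2bm: "exp (- (beta_c * 2)) = sqrt 2 - 1"
proof -
  have "exp (- (beta_c * 2)) = 1 / (sqrt 2 + 1)" by (simp add: exp_minus exp2b field_simps)
  also have "\<dots> = sqrt 2 - 1"
  proof -
    have "(sqrt 2 - 1) * (sqrt 2 + 1) = (1::real)" by (simp add: algebra_simps)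
    moreover have "(0::real) < sqrt 2 + 1" by (simp add: add_pos_nonneg)
    ultimately show ?thesis by (simp add: field_simps)
  qed
  finally show ?thesis .
qed

lemma num_real1:
  assumes "s = 1 \<or> s = -1" "t = 1 \<or> t = -1"
  shows "- real_of_int t = sqrt 2 * of_int s - exp (beta_c * (2 * of_int (t * s))) * of_int s"
  using assms exp2b exp2bm by (elim disjE) (simp_all add: mult.commute)

lemma num_real2:
  assumes "s = 1 \<or> s = -1" "t = 1 \<or> t = -1"
  shows "real_of_int t = sqrt 2 * of_int s - exp (- (beta_c * (2 * of_int (t * s)))) * of_int s"
  using assms exp2b exp2bm by (elim disjE) (simp_all add: mult.commute)

lemma num1:
  assumes "s = 1 \<or> s = -1" "t = 1 \<or> t = -1"
  shows "- complex_of_int t = s2 * of_int s - complex_of_real (exp (beta_c * (2 * of_int (t * s)))) * of_int s"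
proof -
  have "complex_of_real (- real_of_int t) = complex_of_real (sqrt 2 * of_int s - exp (beta_c * (2 * of_int (t * s))) * of_int s)"
    using num_real1[OF assms] by simp
  then show ?thesis by simp
qed

lemma num2:
  assumes "s = 1 \<or> s = -1" "t = 1 \<or> t = -1"
  shows "complex_of_int t = s2 * of_int s - complex_of_real (exp (- (beta_c * (2 * of_int (t * s))))) * of_int s"
proof -
  have "complex_of_real (real_of_int t) = complex_of_real (sqrt 2 * of_int s - exp (- (beta_c * (2 * of_int (t * s)))) * of_int s)"
    using num_real2[OF assms] by simp
  then show ?thesis by simp
qed

lemma flip_in: "a \<le> x \<Longrightarrow> x \<le> k \<Longrightarrow> flip a k \<rho> x = - \<rho> x" by (simp add: flip_def)
lemma flip_out: "k < x \<Longrightarrow> flip a k \<rho> x = \<rho> x" by (simp add: flip_def)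
lemma flip_out2: "x < a \<Longrightarrow> flip a k \<rho> x = \<rho> x" by (simp add: flip_def)

lemma TvNZ: "Tv a b \<tau> \<sigma> \<noteq> 0 \<Longrightarrow> \<tau> \<in> Conf a b \<and> \<sigma> \<in> Conf a b \<and> \<tau> a = \<sigma> a \<and> \<tau> b = \<sigma> b"
  unfolding Tv_def by (auto split: if_splits)

lemma TvS1:
  assumes "a \<le> k" "k < b"
  shows "Tv a b (flip a k \<tau>) \<rho> = Tv a b \<tau> (flip a k \<rho>)"
proof -
  have s: "(\<Sum>x\<in>{a..b}. real_of_int (\<rho> x * flip a k \<tau> x)) = (\<Sum>x\<in>{a..b}. real_of_int (flip a k \<rho> x * \<tau> x))"
    by (intro sum.cong) (auto simp: flip_def)
  have c: "(flip a k \<tau> a = \<rho> a) = (\<tau> a = flip a k \<rho> a)" "flip a k \<tau> b = \<tau> b" "flip a k \<rho> b = \<rho> b"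
    using assms by (auto simp: flip_def)
  show ?thesis unfolding Tv_def s using c assms by auto
qed

lemma TvS2:
  assumes "a < k" "k < b"
  shows "Tv a b \<tau> (flip a (k-1) \<rho>) = Tv a b \<tau> (flip a k \<rho>) * complex_of_real (exp (beta_c * (2 * of_int (\<tau> k * \<rho> k))))"
proof -
  have s: "(\<Sum>x\<in>{a..b}. real_of_int (flip a (k-1) \<rho> x * \<tau> x)) = (\<Sum>x\<in>{a..b}. real_of_int (flip a k \<rho> x * \<tau> x))
      + (real_of_int (flip a (k-1) \<rho> k * \<tau> k) - real_of_int (flip a k \<rho> k * \<tau> k))"
    using assms by (intro sum_change1) (auto simp: flip_def)
  have s2: "real_of_int (flip a (k-1) \<rho> k * \<tau> k) - real_of_int (flip a k \<rho> k * \<tau> k) = 2 * of_int (\<tau> k * \<rho> k)"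
    using assms by (simp add: flip_def)
  have c: "flip a (k-1) \<rho> a = flip a k \<rho> a" "flip a (k-1) \<rho> b = \<rho> b" "flip a k \<rho> b = \<rho> b"
    using assms by (auto simp: flip_def)
  show ?thesis unfolding Tv_def s s2 using c assms
    by (auto simp: distrib_left exp_add)
qed

lemma Tv_A:
  assumes "a \<le> k" "k < b"
  shows "op_mult a b (Aop a b k) (Tv a b) \<tau> \<rho> =
     (if k = a then 1 else s2) * op_mult a b (Tv a b) (Aop a b k) \<tau> \<rho>
     - (if a < k then op_mult a b (Tv a b) (Bop a b (k-1)) \<tau> \<rho> else 0)"
proof -
  have L: "op_mult a b (Aop a b k) (Tv a b) \<tau> \<rho> = (if \<tau> \<in> Conf a b then - of_int (\<tau> k) * Tv a b \<tau> (flip a k \<rho>) else 0)"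
    unfolding Aop_def using assms by (simp only: mult_gen_left) (simp add: TvS1 flip_in)
  have R1: "op_mult a b (Tv a b) (Aop a b k) \<tau> \<rho> = (if \<rho> \<in> Conf a b then Tv a b \<tau> (flip a k \<rho>) * of_int (\<rho> k) else 0)"
    unfolding Aop_def using assms by (simp only: mult_gen_right)
  have R2: "a < k \<Longrightarrow> op_mult a b (Tv a b) (Bop a b (k-1)) \<tau> \<rho> = (if \<rho> \<in> Conf a b then Tv a b \<tau> (flip a k \<rho>) * complex_of_real (exp (beta_c * (2 * of_int (\<tau> k * \<rho> k)))) * of_int (\<rho> k) else 0)"
    unfolding Bop_def using assms by (simp only: mult_gen_right) (simp add: TvS2)
  show ?thesis
  proof (cases "Tv a b \<tau> (flip a k \<rho>) = 0")
    case True
    then show ?thesis unfolding L R1 using R2 by auto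
  next
    case False
    from TvNZ[OF False] assms have cf: "\<tau> \<in> Conf a b" "\<rho> \<in> Conf a b" "\<tau> a = - \<rho> a"
      by (auto simp: flip_in)
    show ?thesis
    proof (cases "k = a")
      case True
      then show ?thesis unfolding L R1 using cf by simp
    next
      case False
      with assms have "a < k" by simp
      have h: "- complex_of_int (\<tau> k) = s2 * of_int (\<rho> k) - complex_of_real (exp (beta_c * (2 * of_int (\<tau> k * \<rho> k)))) * of_int (\<rho> k)"
        using num1[of "\<rho> k" "\<tau> k"] Conf_val[of \<rho> a b k] Conf_val[of \<tau> a b k] cf by simp
      have h2: "- complex_of_int (\<tau> k) * Tv a b \<tau> (flip a k \<rho>) = (s2 * of_int (\<rho> k) - complex_of_real (exp (beta_c * (2 * of_int (\<tau> k * \<rho> k)))) * of_int (\<rho> k)) * Tv a b \<tau> (flip a k \<rho>)"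
        unfolding h ..
      show ?thesis unfolding L R1 R2[OF \<open>a < k\<close>] using cf False h2 \<open>a < k\<close>
        by (simp add: algebra_simps)
    qed
  qed
qed

lemma Tv_B:
  assumes "a \<le> k" "k < b"
  shows "op_mult a b (Bop a b k) (Tv a b) \<tau> \<rho> =
     (if k = b - 1 then 1 else s2) * op_mult a b (Tv a b) (Bop a b k) \<tau> \<rho>
     - (if k < b - 1 then op_mult a b (Tv a b) (Aop a b (k+1)) \<tau> \<rho> else 0)"
proof -
  have L: "op_mult a b (Bop a b k) (Tv a b) \<tau> \<rho> = (if \<tau> \<in> Conf a b then of_int (\<tau> (k+1)) * Tv a b \<tau> (flip a k \<rho>) else 0)"
    unfolding Bop_def using assms by (simp only: mult_gen_left) (simp add: TvS1 flip_out)
  have R1: "op_mult a b (Tv a b) (Bop a b k) \<tau> \<rho> = (if \<rho> \<in> Conf a b then Tv a b \<tau> (flip a k \<rho>) * of_int (\<rho> (k+1)) else 0)"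
    unfolding Bop_def using assms by (simp only: mult_gen_right)
  have R2: "k < b - 1 \<Longrightarrow> op_mult a b (Tv a b) (Aop a b (k+1)) \<tau> \<rho> = (if \<rho> \<in> Conf a b then Tv a b \<tau> (flip a k \<rho>) * complex_of_real (exp (- (beta_c * (2 * of_int (\<tau> (k+1) * \<rho> (k+1)))))) * of_int (\<rho> (k+1)) else 0)"
  proof -
    assume "k < b - 1"
    have e: "Tv a b \<tau> (flip a k \<rho>) = Tv a b \<tau> (flip a (k+1) \<rho>) * complex_of_real (exp (beta_c * (2 * of_int (\<tau> (k+1) * \<rho> (k+1)))))"
      using TvS2[of a "k+1" b \<tau> \<rho>] assms \<open>k < b - 1\<close> by simp
    have "Tv a b \<tau> (flip a (k+1) \<rho>) = Tv a b \<tau> (flip a k \<rho>) * complex_of_real (exp (- (beta_c * (2 * of_int (\<tau> (k+1) * \<rho> (k+1))))))"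
      unfolding e by (simp add: mult.assoc flip: of_real_mult exp_add)
    then show ?thesis unfolding Aop_def using assms \<open>k < b - 1\<close> by (simp only: mult_gen_right)
  qed
  show ?thesis
  proof (cases "Tv a b \<tau> (flip a k \<rho>) = 0")
    case True
    then show ?thesis unfolding L R1 using R2 by auto
  next
    case False
    from TvNZ[OF False] assms have cf: "\<tau> \<in> Conf a b" "\<rho> \<in> Conf a b" "\<tau> b = \<rho> b"
      by (auto simp: flip_out)
    show ?thesis
    proof (cases "k = b - 1")
      case True
      then show ?thesis unfolding L R1 using cf by simp
    next
      case False
      with assms have "k < b - 1" by simp
      have h: "complex_of_int (\<tau> (k+1)) = s2 * of_int (\<rho> (k+1)) - complex_of_real (exp (- (beta_c * (2 * of_int (\<tau> (k+1) * \<rho> (k+1)))))) * of_int (\<rho> (k+1))"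
        using num2[of "\<rho> (k+1)" "\<tau> (k+1)"] Conf_val[of \<rho> a b "k+1"] Conf_val[of \<tau> a b "k+1"] cf by simp
      have h2: "complex_of_int (\<tau> (k+1)) * Tv a b \<tau> (flip a k \<rho>) = (s2 * of_int (\<rho> (k+1)) - complex_of_real (exp (- (beta_c * (2 * of_int (\<tau> (k+1) * \<rho> (k+1)))))) * of_int (\<rho> (k+1))) * Tv a b \<tau> (flip a k \<rho>)"
        using h by simp
      show ?thesis unfolding L R1 R2[OF \<open>k < b - 1\<close>] using cf False h2 \<open>k < b - 1\<close>
        by (simp add: algebra_simps)
    qed
  qed
qed


lemma lc_cong: "(\<And>j. a \<le> j \<Longrightarrow> j < b \<Longrightarrow> \<alpha> j = \<alpha>' j) \<Longrightarrow> (\<And>j. a \<le> j \<Longrightarrow> j < b \<Longrightarrow> \<beta> j = \<beta>' j) \<Longrightarrow> lc a b \<alpha> \<beta> = lc a b \<alpha>' \<beta>'"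
  unfolding lc_def by (intro ext sum.cong) auto

lemma sum_delta_k: "(k::int) \<in> {a..<b} \<Longrightarrow> (\<Sum>j\<in>{a..<b}. (if j = k then c else 0) * (X j::complex)) = c * X k"
  by (simp add: ifz_mult sum.delta)

lemma lc_Th: "op_mult a b (lc a b \<alpha> \<beta>) (Th_half a b) = op_mult a b (Th_half a b)
   (lc a b (\<lambda>j. of_real chb * \<alpha> j + of_real shb * \<beta> j) (\<lambda>j. of_real shb * \<alpha> j + of_real chb * \<beta> j))"
proof -
  have "op_mult a b (lc a b \<alpha> \<beta>) (Th_half a b) = op_mult a b (Th_half a b) (lc a b
     (\<lambda>j. \<Sum>k\<in>{a..<b}. \<alpha> k * (\<lambda>k j. if j = k then of_real chb else 0) k j + \<beta> k * (\<lambda>k j. if j = k then of_real shb else 0) k j)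
     (\<lambda>j. \<Sum>k\<in>{a..<b}. \<alpha> k * (\<lambda>k j. if j = k then of_real shb else 0) k j + \<beta> k * (\<lambda>k j. if j = k then of_real chb else 0) k j))"
  proof (rule linext)
    fix k \<tau> \<rho> assume k: "k \<in> {a..<b}"
    show "op_mult a b (Aop a b k) (Th_half a b) \<tau> \<rho> = (\<Sum>j\<in>{a..<b}. (if j = k then of_real chb else 0) * op_mult a b (Th_half a b) (Aop a b j) \<tau> \<rho>
        + (if j = k then of_real shb else 0) * op_mult a b (Th_half a b) (Bop a b j) \<tau> \<rho>)"
      using k by (simp add: sum.distrib sum_delta_k Th_A)
    show "op_mult a b (Bop a b k) (Th_half a b) \<tau> \<rho> = (\<Sum>j\<in>{a..<b}. (if j = k then of_real shb else 0) * op_mult a b (Th_half a b) (Aop a b j) \<tau> \<rho>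
        + (if j = k then of_real chb else 0) * op_mult a b (Th_half a b) (Bop a b j) \<tau> \<rho>)"
      using k by (simp add: sum.distrib sum_delta_k Th_B)
  qed
  also have "\<dots> = op_mult a b (Th_half a b)
   (lc a b (\<lambda>j. of_real chb * \<alpha> j + of_real shb * \<beta> j) (\<lambda>j. of_real shb * \<alpha> j + of_real chb * \<beta> j))"
    by (intro arg_cong[where f="op_mult a b (Th_half a b)"] lc_cong)
       (simp_all add: sum.distrib if_distrib[where f="\<lambda>x. _ * x"] sum.delta' algebra_simps cong: if_cong)
  finally show ?thesis .
qed

definition ea :: "int \<Rightarrow> int \<Rightarrow> complex" where "ea a j = (if j = a then 1 else s2)"
definition eb :: "int \<Rightarrow> int \<Rightarrow> complex" where "eb b j = (if j = b - 1 then 1 else s2)"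

lemma lc_Tv: "op_mult a b (lc a b \<alpha> \<beta>) (Tv a b) = op_mult a b (Tv a b)
   (lc a b (\<lambda>j. ea a j * \<alpha> j - (if a < j then \<beta> (j-1) else 0)) (\<lambda>j. eb b j * \<beta> j - (if j < b - 1 then \<alpha> (j+1) else 0)))"
proof -
  let ?FA = "\<lambda>k j. if j = k then ea a k else 0"
  let ?FB = "\<lambda>k j. if a < k then (if j = k - 1 then -1 else 0) else (0::complex)"
  let ?GA = "\<lambda>k j. if k < b - 1 then (if j = k + 1 then -1 else 0) else (0::complex)"
  let ?GB = "\<lambda>k j. if j = k then eb b k else 0"
  have "op_mult a b (lc a b \<alpha> \<beta>) (Tv a b) = op_mult a b (Tv a b) (lc a b
     (\<lambda>j. \<Sum>k\<in>{a..<b}. \<alpha> k * ?FA k j + \<beta> k * ?GA k j)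
     (\<lambda>j. \<Sum>k\<in>{a..<b}. \<alpha> k * ?FB k j + \<beta> k * ?GB k j))"
  proof (rule linext)
    fix k \<tau> \<rho> assume k: "k \<in> {a..<b}"
    show "op_mult a b (Aop a b k) (Tv a b) \<tau> \<rho> = (\<Sum>j\<in>{a..<b}. ?FA k j * op_mult a b (Tv a b) (Aop a b j) \<tau> \<rho>
        + ?FB k j * op_mult a b (Tv a b) (Bop a b j) \<tau> \<rho>)"
      using k by (simp add: sum.distrib ifz_mult sum.delta Tv_A ea_def)
    show "op_mult a b (Bop a b k) (Tv a b) \<tau> \<rho> = (\<Sum>j\<in>{a..<b}. ?GA k j * op_mult a b (Tv a b) (Aop a b j) \<tau> \<rho>
        + ?GB k j * op_mult a b (Tv a b) (Bop a b j) \<tau> \<rho>)"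
      using k by (simp add: sum.distrib ifz_mult sum.delta Tv_B eb_def)
  qed
  also have "\<dots> = op_mult a b (Tv a b)
   (lc a b (\<lambda>j. ea a j * \<alpha> j - (if a < j then \<beta> (j-1) else 0)) (\<lambda>j. eb b j * \<beta> j - (if j < b - 1 then \<alpha> (j+1) else 0)))"
  proof (intro arg_cong[where f="op_mult a b (Tv a b)"] lc_cong)
    fix j assume j: "a \<le> j" "j < b"
    have e1: "(\<Sum>k\<in>{a..<b}. \<beta> k * ?GA k j) = (\<Sum>k\<in>{a..<b}. if k = j - 1 then (if a < j then - \<beta> k else 0) else 0)"
      using j by (intro sum.cong) auto
    have e2: "(\<Sum>k\<in>{a..<b}. \<alpha> k * ?FA k j) = (\<Sum>k\<in>{a..<b}. if k = j then ea a j * \<alpha> k else 0)"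
      by (intro sum.cong) auto
    show "(\<Sum>k\<in>{a..<b}. \<alpha> k * ?FA k j + \<beta> k * ?GA k j) = ea a j * \<alpha> j - (if a < j then \<beta> (j-1) else 0)"
      unfolding sum.distrib e1 e2 using j by (simp add: sum.delta)
    have e3: "(\<Sum>k\<in>{a..<b}. \<alpha> k * ?FB k j) = (\<Sum>k\<in>{a..<b}. if k = j + 1 then (if j < b - 1 then - \<alpha> k else 0) else 0)"
      using j by (intro sum.cong) auto
    have e4: "(\<Sum>k\<in>{a..<b}. \<beta> k * ?GB k j) = (\<Sum>k\<in>{a..<b}. if k = j then eb b j * \<beta> k else 0)"
      by (intro sum.cong) auto
    show "(\<Sum>k\<in>{a..<b}. \<alpha> k * ?FB k j + \<beta> k * ?GB k j) = eb b j * \<beta> j - (if j < b - 1 then \<alpha> (j+1) else 0)"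
      unfolding sum.distrib e3 e4 using j by (simp add: sum.delta)
  qed
  finally show ?thesis .
qed


definition ConfS :: "int set \<Rightarrow> spin set" where
  "ConfS S = {\<rho>. (\<forall>x\<in>S. \<rho> x = 1 \<or> \<rho> x = -1) \<and> (\<forall>x. x \<notin> S \<longrightarrow> \<rho> x = 1)}"

lemma Conf_ConfS: "Conf a b = ConfS {a..b}"
  unfolding Conf_def ConfS_def by auto

lemma ConfS_insert:
  assumes "x \<notin> S"
  shows "ConfS (insert x S) = (\<lambda>(\<sigma>, s). \<sigma>(x := s)) ` (ConfS S \<times> {1, -1})"
proof
  show "ConfS (insert x S) \<subseteq> (\<lambda>(\<sigma>, s). \<sigma>(x := s)) ` (ConfS S \<times> {1, -1})"
  proof
    fix \<rho> assume r: "\<rho> \<in> ConfS (insert x S)"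
    have "\<rho>(x := 1) \<in> ConfS S" using r assms unfolding ConfS_def by auto
    moreover have "\<rho> x \<in> {1, -1}" using r unfolding ConfS_def by auto
    moreover have "\<rho> = (\<rho>(x := 1))(x := \<rho> x)" by simp
    ultimately show "\<rho> \<in> (\<lambda>(\<sigma>, s). \<sigma>(x := s)) ` (ConfS S \<times> {1, -1})" by (metis (no_types, lifting) SigmaI image_eqI case_prod_conv)
  qed
  show "(\<lambda>(\<sigma>, s). \<sigma>(x := s)) ` (ConfS S \<times> {1, -1}) \<subseteq> ConfS (insert x S)"
    unfolding ConfS_def by force
qed

lemma ConfS_inj:
  assumes "x \<notin> S"
  shows "inj_on (\<lambda>(\<sigma>, s). \<sigma>(x := s)) (ConfS S \<times> {1, -1})"
proof (rule inj_onI, clarify)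
  fix \<sigma> s \<sigma>' s'
  assume h: "\<sigma> \<in> ConfS S" "s \<in> {1, -1}" "\<sigma>' \<in> ConfS S" "s' \<in> {1, -1}" "\<sigma>(x := s) = \<sigma>'(x := s')"
  have "s = s'" using fun_cong[OF h(5), of x] by simp
  moreover have "\<sigma> = \<sigma>'"
  proof
    fix y show "\<sigma> y = \<sigma>' y"
    proof (cases "y = x")
      case True then show ?thesis using h assms unfolding ConfS_def by auto
    next
      case False then show ?thesis using fun_cong[OF h(5), of y] by simp
    qed
  qed
  ultimately show "\<sigma> = \<sigma>' \<and> s = s'" by simp
qed

lemma finite_ConfS: "finite S \<Longrightarrow> finite (ConfS S)"
proof (induction S rule: finite_induct)
  case empty
  have "ConfS {} = {\<lambda>_. 1}" unfolding ConfS_def by auto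
  then show ?case by simp
next
  case (insert x S)
  then show ?case by (simp add: ConfS_insert)
qed

lemma prod_sum_ConfS:
  fixes g :: "int \<Rightarrow> int \<Rightarrow> complex"
  assumes "finite S"
  shows "(\<Sum>\<sigma>\<in>ConfS S. \<Prod>x\<in>S. g x (\<sigma> x)) = (\<Prod>x\<in>S. g x 1 + g x (-1))"
  using assms
proof (induction S rule: finite_induct)
  case empty
  have "ConfS {} = {\<lambda>_. 1}" unfolding ConfS_def by auto
  then show ?case by simp
next
  case (insert x S)
  have "(\<Sum>\<sigma>\<in>ConfS (insert x S). \<Prod>y\<in>insert x S. g y (\<sigma> y))
      = (\<Sum>p\<in>ConfS S \<times> {1, -1}. \<Prod>y\<in>insert x S. g y (((fst p)(x := snd p)) y))"
    unfolding ConfS_insert[OF insert(2)] sum.reindex[OF ConfS_inj[OF insert(2)]]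
    by (simp add: case_prod_beta comp_def)
  also have "\<dots> = (\<Sum>p\<in>ConfS S \<times> {1, -1}. g x (snd p) * (\<Prod>y\<in>S. g y (fst p y)))"
  proof (intro sum.cong refl)
    fix p :: "spin \<times> int" assume "p \<in> ConfS S \<times> {1, -1}"
    have "(\<Prod>y\<in>S. g y (((fst p)(x := snd p)) y)) = (\<Prod>y\<in>S. g y (fst p y))"
      using insert(2) by (intro prod.cong) auto
    then show "(\<Prod>y\<in>insert x S. g y (((fst p)(x := snd p)) y)) = g x (snd p) * (\<Prod>y\<in>S. g y (fst p y))"
      using insert(1,2) by simp
  qed
  also have "\<dots> = (\<Sum>\<sigma>\<in>ConfS S. \<Sum>s\<in>{1,-1}. g x s * (\<Prod>y\<in>S. g y (\<sigma> y)))"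
    by (rule sum.cartesian_product[symmetric, unfolded case_prod_beta])
  also have "\<dots> = (\<Sum>\<sigma>\<in>ConfS S. (g x 1 + g x (-1)) * (\<Prod>y\<in>S. g y (\<sigma> y)))"
    by (intro sum.cong refl) (simp add: distrib_right)
  also have "\<dots> = (g x 1 + g x (-1)) * (\<Sum>\<sigma>\<in>ConfS S. \<Prod>y\<in>S. g y (\<sigma> y))"
    by (simp only: sum_distrib_left)
  also have "\<dots> = (\<Prod>y\<in>insert x S. g y 1 + g y (-1))"
    using insert by simp
  finally show ?case .
qed

lemma prod_sum_Conf:
  fixes g :: "int \<Rightarrow> int \<Rightarrow> complex"
  shows "(\<Sum>\<sigma>\<in>Conf a b. \<Prod>x\<in>{a..b}. g x (\<sigma> x)) = (\<Prod>x\<in>{a..b}. g x 1 + g x (-1))"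
  unfolding Conf_ConfS by (rule prod_sum_ConfS) simp


definition tv1 :: "int \<Rightarrow> int \<Rightarrow> int \<Rightarrow> int \<Rightarrow> int \<Rightarrow> complex" where
  "tv1 a b x s s' = (if x = a \<or> x = b then (if s = s' then complex_of_real (exp beta_c) else 0)
      else complex_of_real (exp (beta_c * of_int (s' * s))))"

definition vv :: "int \<Rightarrow> int \<Rightarrow> int \<Rightarrow> int \<Rightarrow> int \<Rightarrow> complex" where
  "vv a b x s s' = (if x = a \<or> x = b then (if s = s' then complex_of_real (exp (- beta_c)) else 0)
      else of_int (s * s') * complex_of_real (exp (beta_c * of_int (s * s'))) / 2)"

definition Vinv :: "int \<Rightarrow> int \<Rightarrow> op" where
  "Vinv a b = (\<lambda>\<tau> \<rho>. if \<tau> \<in> Conf a b \<and> \<rho> \<in> Conf a b then \<Prod>x\<in>{a..b}. vv a b x (\<tau> x) (\<rho> x) else 0)"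

lemma Conf_eq_iff: "\<tau> \<in> Conf a b \<Longrightarrow> \<rho> \<in> Conf a b \<Longrightarrow> (\<tau> = \<rho>) = (\<forall>x\<in>{a..b}. \<tau> x = \<rho> x)"
  unfolding Conf_def by (auto simp: fun_eq_iff)

lemma prod_ind: "finite S \<Longrightarrow> (\<Prod>x\<in>S. if P x then (1::complex) else 0) = (if \<forall>x\<in>S. P x then 1 else 0)"
  by (induction S rule: finite_induct) auto

lemma Tv_prod:
  assumes "\<tau> \<in> Conf a b" "\<sigma> \<in> Conf a b" "a < b"
  shows "Tv a b \<tau> \<sigma> = (\<Prod>x\<in>{a..b}. tv1 a b x (\<tau> x) (\<sigma> x))"
proof (cases "\<tau> a = \<sigma> a \<and> \<tau> b = \<sigma> b")
  case True
  have "Tv a b \<tau> \<sigma> = complex_of_real (\<Prod>x\<in>{a..b}. exp (beta_c * of_int (\<sigma> x * \<tau> x)))"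
    unfolding Tv_def using assms True by (simp add: sum_distrib_left exp_sum)
  also have "\<dots> = (\<Prod>x\<in>{a..b}. tv1 a b x (\<tau> x) (\<sigma> x))"
    unfolding of_real_prod
  proof (intro prod.cong refl)
    fix x assume "x \<in> {a..b}"
    show "complex_of_real (exp (beta_c * of_int (\<sigma> x * \<tau> x))) = tv1 a b x (\<tau> x) (\<sigma> x)"
      using True Conf_val[OF assms(2), of x] unfolding tv1_def by auto
  qed
  finally show ?thesis .
next
  case False
  then have "\<exists>x\<in>{a..b}. tv1 a b x (\<tau> x) (\<sigma> x) = 0" using assms unfolding tv1_def by auto
  then have "(\<Prod>x\<in>{a..b}. tv1 a b x (\<tau> x) (\<sigma> x)) = 0" by (simp add: prod_zero_iff)
  then show ?thesis unfolding Tv_def using False by auto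
qed

lemma expbb: "exp beta_c * exp beta_c = sqrt 2 + 1"
  using exp2b by (simp flip: exp_add add: mult_2_right[symmetric] mult.commute)

lemma expbbm: "exp (- beta_c) * exp (- beta_c) = sqrt 2 - 1"
  using exp2bm by (simp flip: exp_add add: mult_2_right[symmetric] mult.commute)

lemma expbm: "exp beta_c * exp (- beta_c) = 1"
  by (simp flip: exp_add)

lemma two_by_two:
  assumes "t = 1 \<or> t = -1" "r = 1 \<or> r = -1"
  shows "tv1 a b x t 1 * vv a b x 1 r + tv1 a b x t (-1) * vv a b x (-1) r = (if t = r then 1 else 0)"
    "vv a b x t 1 * tv1 a b x 1 r + vv a b x t (-1) * tv1 a b x (-1) r = (if t = r then 1 else 0)"
proof -
  have A: "complex_of_real (exp beta_c) * complex_of_real (exp beta_c) = s2 + 1"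
    using expbb by (metis of_real_1 of_real_add of_real_mult)
  have B: "complex_of_real (exp (- beta_c)) * complex_of_real (exp (- beta_c)) = s2 - 1"
    using expbbm by (metis of_real_1 of_real_diff of_real_mult)
  have C: "complex_of_real (exp beta_c) * complex_of_real (exp (- beta_c)) = 1"
    using expbm by (metis of_real_1 of_real_mult)
  have C': "complex_of_real (exp (- beta_c)) * complex_of_real (exp beta_c) = 1"
    using C by (simp add: mult.commute)
  show "tv1 a b x t 1 * vv a b x 1 r + tv1 a b x t (-1) * vv a b x (-1) r = (if t = r then 1 else 0)"
    using assms unfolding tv1_def vv_def by (elim disjE) (auto simp: A B C C' field_simps)
  show "vv a b x t 1 * tv1 a b x 1 r + vv a b x t (-1) * tv1 a b x (-1) r = (if t = r then 1 else 0)"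
    using assms unfolding tv1_def vv_def by (elim disjE) (auto simp: A B C C' field_simps)
qed


lemma Tv_V: assumes "a < b" shows "op_mult a b (Tv a b) (Vinv a b) = op_id a b"
proof (intro ext)
  fix \<tau> \<rho>
  show "op_mult a b (Tv a b) (Vinv a b) \<tau> \<rho> = op_id a b \<tau> \<rho>"
  proof (cases "\<tau> \<in> Conf a b \<and> \<rho> \<in> Conf a b")
    case True
    have "op_mult a b (Tv a b) (Vinv a b) \<tau> \<rho> = (\<Sum>\<sigma>\<in>Conf a b. \<Prod>x\<in>{a..b}. tv1 a b x (\<tau> x) (\<sigma> x) * vv a b x (\<sigma> x) (\<rho> x))"
      unfolding op_mult_def Vinv_def using True assms by (intro sum.cong) (auto simp: Tv_prod prod.distrib)
    also have "\<dots> = (\<Prod>x\<in>{a..b}. tv1 a b x (\<tau> x) 1 * vv a b x 1 (\<rho> x) + tv1 a b x (\<tau> x) (-1) * vv a b x (-1) (\<rho> x))"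
      by (rule prod_sum_Conf)
    also have "\<dots> = (\<Prod>x\<in>{a..b}. if \<tau> x = \<rho> x then 1 else 0)"
      using True by (intro prod.cong refl two_by_two) (auto dest: Conf_val)
    also have "\<dots> = op_id a b \<tau> \<rho>"
      unfolding op_id_def using True Conf_eq_iff[of \<tau> a b \<rho>] by (simp add: prod_ind)
    finally show ?thesis .
  next
    case False
    then show ?thesis unfolding op_mult_def op_id_def Vinv_def Tv_def by auto
  qed
qed

lemma V_Tv: assumes "a < b" shows "op_mult a b (Vinv a b) (Tv a b) = op_id a b"
proof (intro ext)
  fix \<tau> \<rho>
  show "op_mult a b (Vinv a b) (Tv a b) \<tau> \<rho> = op_id a b \<tau> \<rho>"
  proof (cases "\<tau> \<in> Conf a b \<and> \<rho> \<in> Conf a b")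
    case True
    have "op_mult a b (Vinv a b) (Tv a b) \<tau> \<rho> = (\<Sum>\<sigma>\<in>Conf a b. \<Prod>x\<in>{a..b}. vv a b x (\<tau> x) (\<sigma> x) * tv1 a b x (\<sigma> x) (\<rho> x))"
      unfolding op_mult_def Vinv_def using True assms by (intro sum.cong) (auto simp: Tv_prod prod.distrib)
    also have "\<dots> = (\<Prod>x\<in>{a..b}. vv a b x (\<tau> x) 1 * tv1 a b x 1 (\<rho> x) + vv a b x (\<tau> x) (-1) * tv1 a b x (-1) (\<rho> x))"
      by (rule prod_sum_Conf)
    also have "\<dots> = (\<Prod>x\<in>{a..b}. if \<tau> x = \<rho> x then 1 else 0)"
      using True by (intro prod.cong refl two_by_two) (auto dest: Conf_val)
    also have "\<dots> = op_id a b \<tau> \<rho>"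
      unfolding op_id_def using True Conf_eq_iff[of \<tau> a b \<rho>] by (simp add: prod_ind)
    finally show ?thesis .
  next
    case False
    then show ?thesis unfolding op_mult_def op_id_def Vinv_def Tv_def by auto
  qed
qed

definition Thi :: "int \<Rightarrow> int \<Rightarrow> op" where
  "Thi a b = (\<lambda>\<tau> \<rho>. if \<tau> = \<rho> \<and> \<rho> \<in> Conf a b then 1 / hf a b \<rho> else 0)"

lemma hf_nz: "hf a b \<rho> \<noteq> 0" unfolding hf_def by simp

lemma Th_Thi: "op_mult a b (Th_half a b) (Thi a b) = op_id a b"
  by (intro ext) (simp add: Th_left Thi_def op_id_def hf_nz)

lemma Thi_Th: "op_mult a b (Thi a b) (Th_half a b) = op_id a b"
  by (intro ext) (simp add: Th_right Thi_def op_id_def hf_nz)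

definition inv_pair :: "int \<Rightarrow> int \<Rightarrow> op \<Rightarrow> op \<Rightarrow> bool" where
  "inv_pair a b X Y \<longleftrightarrow> is_op a b X \<and> is_op a b Y \<and> op_mult a b X Y = op_id a b \<and> op_mult a b Y X = op_id a b"

lemma inv_pair_mult:
  assumes "inv_pair a b X X'" "inv_pair a b Y Y'"
  shows "inv_pair a b (op_mult a b X Y) (op_mult a b Y' X')"
proof -
  have 1: "op_mult a b (op_mult a b X Y) (op_mult a b Y' X') = op_id a b"
    using assms unfolding inv_pair_def
    by (metis op_mult_assoc op_id_left)
  have 2: "op_mult a b (op_mult a b Y' X') (op_mult a b X Y) = op_id a b"
    using assms unfolding inv_pair_def
    by (metis op_mult_assoc op_id_left)
  show ?thesis using 1 2 assms unfolding inv_pair_def by (simp add: is_op_mult)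
qed

lemma op_inv_eq:
  assumes "inv_pair a b X Y"
  shows "op_inv a b X = Y"
  unfolding op_inv_def
proof (rule the_equality)
  show "is_op a b Y \<and> op_mult a b X Y = op_id a b \<and> op_mult a b Y X = op_id a b"
    using assms unfolding inv_pair_def by simp
next
  fix B assume B: "is_op a b B \<and> op_mult a b X B = op_id a b \<and> op_mult a b B X = op_id a b"
  have "B = op_mult a b B (op_id a b)" using B op_id_right by metis
  also have "\<dots> = op_mult a b B (op_mult a b X Y)" using assms unfolding inv_pair_def by simp
  also have "\<dots> = op_mult a b (op_mult a b B X) Y" by (simp add: op_mult_assoc)
  also have "\<dots> = Y" using B assms op_id_left unfolding inv_pair_def by simp
  finally show "B = Y" .
qed

definition Tinv :: "int \<Rightarrow> int \<Rightarrow> op" where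
  "Tinv a b = op_mult a b (Thi a b) (op_mult a b (Vinv a b) (Thi a b))"

lemma is_op_Th: "is_op a b (Th_half a b)" unfolding is_op_def Th_half_def by auto
lemma is_op_Thi: "is_op a b (Thi a b)" unfolding is_op_def Thi_def by auto
lemma is_op_Tv: "is_op a b (Tv a b)" unfolding is_op_def Tv_def by auto
lemma is_op_Vinv: "is_op a b (Vinv a b)" unfolding is_op_def Vinv_def by auto

lemma T_inv_pair: assumes "a < b" shows "inv_pair a b (Tmat a b) (Tinv a b)"
proof -
  have h: "inv_pair a b (Th_half a b) (Thi a b)" unfolding inv_pair_def
    using is_op_Th is_op_Thi Th_Thi Thi_Th by simp
  have v: "inv_pair a b (Tv a b) (Vinv a b)" unfolding inv_pair_def
    using is_op_Tv is_op_Vinv Tv_V[OF assms] V_Tv[OF assms] by simp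
  show ?thesis unfolding Tmat_def Tinv_def
    using inv_pair_mult[OF inv_pair_mult[OF h v] h] by (simp add: op_mult_assoc)
qed

lemma op_inv_T: "a < b \<Longrightarrow> op_inv a b (Tmat a b) = Tinv a b"
  by (rule op_inv_eq[OF T_inv_pair])


abbreviation ch :: complex where "ch \<equiv> complex_of_real chb"
abbreviation sh :: complex where "sh \<equiv> complex_of_real shb"

lemma chb2: "chb * chb = (sqrt 2 + 1) / 2"
  unfolding chb_def using expbb expbbm expbm by (simp add: field_simps power2_eq_square algebra_simps)
lemma shb2: "shb * shb = (sqrt 2 - 1) / 2"
  unfolding shb_def using expbb expbbm expbm by (simp add: field_simps power2_eq_square algebra_simps)
lemma chshb: "chb * shb = 1 / 2"
  unfolding chb_def shb_def using expbb expbbm expbm by (simp add: field_simps power2_eq_square algebra_simps)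

lemma ch2: "ch * ch = (s2 + 1) / 2"
  using chb2 by (metis of_real_1 of_real_add of_real_divide of_real_mult of_real_numeral)
lemma sh2: "sh * sh = (s2 - 1) / 2"
  using shb2 by (metis of_real_1 of_real_diff of_real_divide of_real_mult of_real_numeral)
lemma chsh: "ch * sh = 1 / 2"
  using chshb by (metis of_real_1 of_real_divide of_real_mult of_real_numeral)

definition PHa where "PHa \<alpha> \<beta> = (\<lambda>j. ch * \<alpha> j + sh * \<beta> j)"
definition PHb where "PHb \<alpha> \<beta> = (\<lambda>j. sh * \<alpha> j + ch * \<beta> j)"
definition PVa where "PVa a \<alpha> \<beta> = (\<lambda>j. ea a j * \<alpha> j - (if a < j then \<beta> (j-1) else 0))"
definition PVb where "PVb b \<alpha> \<beta> = (\<lambda>j. eb b j * \<beta> j - (if j < b - 1 then \<alpha> (j+1) else 0))"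

lemma lc_T: "op_mult a b (lc a b \<alpha> \<beta>) (Tmat a b) = op_mult a b (Tmat a b)
  (lc a b (PHa (PVa a (PHa \<alpha> \<beta>) (PHb \<alpha> \<beta>)) (PVb b (PHa \<alpha> \<beta>) (PHb \<alpha> \<beta>)))
          (PHb (PVa a (PHa \<alpha> \<beta>) (PHb \<alpha> \<beta>)) (PVb b (PHa \<alpha> \<beta>) (PHb \<alpha> \<beta>))))"
proof -
  have h: "\<And>\<alpha> \<beta>. op_mult a b (lc a b \<alpha> \<beta>) (Th_half a b) = op_mult a b (Th_half a b) (lc a b (PHa \<alpha> \<beta>) (PHb \<alpha> \<beta>))"
    unfolding PHa_def PHb_def by (rule lc_Th)
  have v: "\<And>\<alpha> \<beta>. op_mult a b (lc a b \<alpha> \<beta>) (Tv a b) = op_mult a b (Tv a b) (lc a b (PVa a \<alpha> \<beta>) (PVb b \<alpha> \<beta>))"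
    unfolding PVa_def PVb_def by (rule lc_Tv)
  let ?H = "Th_half a b" and ?V = "Tv a b" and ?m = "op_mult a b"
  let ?a1 = "PHa \<alpha> \<beta>" and ?b1 = "PHb \<alpha> \<beta>"
  let ?a2 = "PVa a ?a1 ?b1" and ?b2 = "PVb b ?a1 ?b1"
  have "?m (lc a b \<alpha> \<beta>) (?m (?m ?H ?V) ?H) = ?m (?m (?m (lc a b \<alpha> \<beta>) ?H) ?V) ?H"
    by (simp only: op_mult_assoc)
  also have "\<dots> = ?m (?m (?m ?H (lc a b ?a1 ?b1)) ?V) ?H" by (simp only: h)
  also have "\<dots> = ?m ?H (?m (?m (lc a b ?a1 ?b1) ?V) ?H)" by (simp only: op_mult_assoc)
  also have "\<dots> = ?m ?H (?m (?m ?V (lc a b ?a2 ?b2)) ?H)" by (simp only: v)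
  also have "\<dots> = ?m ?H (?m ?V (?m (lc a b ?a2 ?b2) ?H))" by (simp only: op_mult_assoc)
  also have "\<dots> = ?m ?H (?m ?V (?m ?H (lc a b (PHa ?a2 ?b2) (PHb ?a2 ?b2))))" by (simp only: h)
  also have "\<dots> = ?m (?m (?m ?H ?V) ?H) (lc a b (PHa ?a2 ?b2) (PHb ?a2 ?b2))" by (simp only: op_mult_assoc)
  finally show ?thesis unfolding Tmat_def .
qed

definition PhiA :: "int \<Rightarrow> int \<Rightarrow> (int \<Rightarrow> complex) \<Rightarrow> (int \<Rightarrow> complex) \<Rightarrow> int \<Rightarrow> complex" where
  "PhiA a b \<alpha> \<beta> = (\<lambda>j. ea a j * ((s2 + 1) / 2 * \<alpha> j + \<beta> j / 2) + eb b j * ((s2 - 1) / 2 * \<alpha> j + \<beta> j / 2)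
      - (if a < j then \<alpha> (j-1) / 2 + (s2 + 1) / 2 * \<beta> (j-1) else 0)
      - (if j < b - 1 then \<alpha> (j+1) / 2 + (s2 - 1) / 2 * \<beta> (j+1) else 0))"
definition PhiB :: "int \<Rightarrow> int \<Rightarrow> (int \<Rightarrow> complex) \<Rightarrow> (int \<Rightarrow> complex) \<Rightarrow> int \<Rightarrow> complex" where
  "PhiB a b \<alpha> \<beta> = (\<lambda>j. ea a j * (\<alpha> j / 2 + (s2 - 1) / 2 * \<beta> j) + eb b j * (\<alpha> j / 2 + (s2 + 1) / 2 * \<beta> j)
      - (if a < j then (s2 - 1) / 2 * \<alpha> (j-1) + \<beta> (j-1) / 2 else 0)
      - (if j < b - 1 then (s2 + 1) / 2 * \<alpha> (j+1) + \<beta> (j+1) / 2 else 0))"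

lemma ch2': "ch * (ch * x) = (s2 + 1) / 2 * x" by (simp add: mult.assoc[symmetric] ch2)
lemma sh2': "sh * (sh * x) = (s2 - 1) / 2 * x" by (simp add: mult.assoc[symmetric] sh2)
lemma chsh': "ch * (sh * x) = x / 2" by (simp add: mult.assoc[symmetric] chsh)
lemma shch': "sh * (ch * x) = x / 2" by (simp add: mult.left_commute chsh')
lemma shch: "sh * ch = 1 / 2" by (simp add: mult.commute chsh)

lemma Phi_eq: "PHa (PVa a (PHa \<alpha> \<beta>) (PHb \<alpha> \<beta>)) (PVb b (PHa \<alpha> \<beta>) (PHb \<alpha> \<beta>)) = PhiA a b \<alpha> \<beta>"
   "PHb (PVa a (PHa \<alpha> \<beta>) (PHb \<alpha> \<beta>)) (PVb b (PHa \<alpha> \<beta>) (PHb \<alpha> \<beta>)) = PhiB a b \<alpha> \<beta>"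
  unfolding PHa_def PHb_def PVa_def PVb_def PhiA_def PhiB_def
  by (auto simp: fun_eq_iff algebra_simps ch2' sh2' chsh' shch' ch2 sh2 chsh shch)


lemma is_op_lc: "is_op a b (lc a b \<alpha> \<beta>)"
  unfolding is_op_def lc_def Aop_def Bop_def by (auto intro!: sum.neutral)

lemma is_op_pow: "is_op a b A \<Longrightarrow> is_op a b (op_pow a b A n)"
  by (induction n) (auto simp: is_op_id is_op_mult)

lemma pow_comm: "is_op a b A \<Longrightarrow> op_mult a b A (op_pow a b A n) = op_mult a b (op_pow a b A n) A"
proof (induction n)
  case 0 then show ?case by (simp add: op_id_left op_id_right)
next
  case (Suc n)
  have "op_mult a b (op_mult a b A (op_pow a b A n)) A = op_mult a b A (op_mult a b (op_pow a b A n) A)"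
    by (simp only: op_mult_assoc)
  also have "\<dots> = op_mult a b A (op_mult a b A (op_pow a b A n))" using Suc by simp
  finally show ?case by simp
qed

lemma zpow_neg: "op_zpow a b X (- int n) = op_pow a b (op_inv a b X) n"
  unfolding op_zpow_def by (cases n) (simp_all add: nat_add_distrib)

lemma zpow_nonneg: "op_zpow a b X (int n) = op_pow a b X n"
  unfolding op_zpow_def by auto

lemma zpow_cases: obtains n where "z = int n" | n where "z = - int (Suc n)"
  by (metis int_cases)

lemma is_op_zpow: "inv_pair a b X Xi \<Longrightarrow> is_op a b (op_zpow a b X z)"
  unfolding op_zpow_def using op_inv_eq[of a b X Xi] by (auto simp: is_op_pow inv_pair_def)

lemma zpow_succ:
  assumes ip: "inv_pair a b X Xi"
  shows "op_zpow a b X (z + 1) = op_mult a b X (op_zpow a b X z)"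
    "op_zpow a b X (z + 1) = op_mult a b (op_zpow a b X z) X"
proof -
  have inv: "op_inv a b X = Xi" by (rule op_inv_eq[OF ip])
  have ops: "is_op a b X" "is_op a b Xi" "op_mult a b X Xi = op_id a b" "op_mult a b Xi X = op_id a b"
    using ip unfolding inv_pair_def by auto
  have "op_zpow a b X (z + 1) = op_mult a b X (op_zpow a b X z) \<and> op_zpow a b X (z + 1) = op_mult a b (op_zpow a b X z) X"
  proof (cases z rule: zpow_cases)
    case (1 n)
    have "z + 1 = int (Suc n)" using 1 by simp
    then show ?thesis unfolding 1 using ops by (simp only: zpow_nonneg) (simp add: pow_comm)
  next
    case (2 n)
    have e: "z + 1 = - int n" using 2 by simp
    have P: "is_op a b (op_pow a b Xi n)" using ops is_op_pow by blast
    have A: "op_mult a b X (op_mult a b Xi (op_pow a b Xi n)) = op_pow a b Xi n"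
      using ops P by (simp add: op_mult_assoc[symmetric] op_id_left)
    have B: "op_mult a b (op_mult a b Xi (op_pow a b Xi n)) X = op_pow a b Xi n"
      using ops P by (simp add: pow_comm op_mult_assoc op_id_right)
    have z1: "op_zpow a b X (- int n) = op_pow a b Xi n" using zpow_neg[of a b X n] inv by simp
    have z2: "op_zpow a b X (- int (Suc n)) = op_mult a b Xi (op_pow a b Xi n)" using zpow_neg[of a b X "Suc n"] inv by simp
    show ?thesis unfolding e unfolding 2 z1 z2 using A B by simp
  qed
  then show "op_zpow a b X (z + 1) = op_mult a b X (op_zpow a b X z)"
    "op_zpow a b X (z + 1) = op_mult a b (op_zpow a b X z) X" by auto
qed

lemma zpow_pred:
  assumes ip: "inv_pair a b X Xi"
  shows "op_zpow a b X (z - 1) = op_mult a b Xi (op_zpow a b X z)"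
    "op_zpow a b X (z - 1) = op_mult a b (op_zpow a b X z) Xi"
proof -
  have ops: "is_op a b X" "is_op a b Xi" "op_mult a b X Xi = op_id a b" "op_mult a b Xi X = op_id a b"
    using ip unfolding inv_pair_def by auto
  have P: "is_op a b (op_zpow a b X (z - 1))" by (rule is_op_zpow[OF ip])
  have e1: "op_zpow a b X z = op_mult a b X (op_zpow a b X (z - 1))"
    using zpow_succ(1)[OF ip, of "z - 1"] by simp
  have e2: "op_zpow a b X z = op_mult a b (op_zpow a b X (z - 1)) X"
    using zpow_succ(2)[OF ip, of "z - 1"] by simp
  show "op_zpow a b X (z - 1) = op_mult a b Xi (op_zpow a b X z)"
    unfolding e1 using ops P by (simp add: op_mult_assoc[symmetric] op_id_left)
  show "op_zpow a b X (z - 1) = op_mult a b (op_zpow a b X z) Xi"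
    unfolding e2 using ops P by (simp add: op_mult_assoc op_id_right)
qed

lemma zpow_0: "op_zpow a b X 0 = op_id a b" unfolding op_zpow_def by simp

definition cnjT :: "int \<Rightarrow> int \<Rightarrow> int \<Rightarrow> op \<Rightarrow> op" where
  "cnjT a b y X = op_mult a b (op_zpow a b (Tmat a b) (- y)) (op_mult a b X (op_zpow a b (Tmat a b) y))"

context
  fixes a b :: int
  assumes ab: "a < b"
begin

lemma ipT: "inv_pair a b (Tmat a b) (Tinv a b)" by (rule T_inv_pair[OF ab])

lemma zp1: "op_zpow a b (Tmat a b) 1 = Tmat a b"
  using zpow_succ(1)[OF ipT, of 0] ipT by (simp add: zpow_0 op_id_right inv_pair_def)

lemma zpm1: "op_zpow a b (Tmat a b) (-1) = Tinv a b"
  using zpow_pred(1)[OF ipT, of 0] ipT by (simp add: zpow_0 op_id_right inv_pair_def)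

lemma cnjT_0: "is_op a b X \<Longrightarrow> cnjT a b 0 X = X"
  unfolding cnjT_def by (simp add: zpow_0 op_id_left op_id_right)

lemma cnjT_succ: "cnjT a b (y + 1) X = cnjT a b y (cnjT a b 1 X)"
proof -
  have e1: "op_zpow a b (Tmat a b) (- (y + 1)) = op_mult a b (op_zpow a b (Tmat a b) (- y)) (Tinv a b)"
    using zpow_pred(2)[OF ipT, of "- y"] by simp
  show ?thesis unfolding cnjT_def e1 zpow_succ(1)[OF ipT] by (simp only: op_mult_assoc zp1 zpm1)
qed

lemma cnjT_pred: "cnjT a b (y - 1) X = cnjT a b y (cnjT a b (-1) X)"
proof -
  have e1: "op_zpow a b (Tmat a b) (- (y - 1)) = op_mult a b (op_zpow a b (Tmat a b) (- y)) (Tmat a b)"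
    using zpow_succ(2)[OF ipT, of "- y"] by simp
  show ?thesis unfolding cnjT_def e1 zpow_pred(1)[OF ipT] by (simp only: op_mult_assoc minus_minus zp1 zpm1)
qed

lemma cnjT_1_lc: "cnjT a b 1 (lc a b \<alpha> \<beta>) = lc a b (PhiA a b \<alpha> \<beta>) (PhiB a b \<alpha> \<beta>)"
proof -
  have "cnjT a b 1 (lc a b \<alpha> \<beta>) = op_mult a b (Tinv a b) (op_mult a b (lc a b \<alpha> \<beta>) (Tmat a b))"
    unfolding cnjT_def using zp1 zpm1 by simp
  also have "\<dots> = op_mult a b (op_mult a b (Tinv a b) (Tmat a b)) (lc a b (PhiA a b \<alpha> \<beta>) (PhiB a b \<alpha> \<beta>))"
    unfolding lc_T Phi_eq by (simp only: op_mult_assoc)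
  also have "\<dots> = lc a b (PhiA a b \<alpha> \<beta>) (PhiB a b \<alpha> \<beta>)"
    using ipT unfolding inv_pair_def by (simp add: op_id_left is_op_lc)
  finally show ?thesis .
qed

end


definition trn :: "op \<Rightarrow> op" where "trn X = (\<lambda>\<tau> \<rho>. X \<rho> \<tau>)"

lemma trn_trn[simp]: "trn (trn X) = X" unfolding trn_def by simp

lemma trn_mult: "trn (op_mult a b X Y) = op_mult a b (trn Y) (trn X)"
  unfolding trn_def op_mult_def by (simp add: mult.commute)

lemma trn_Th: "trn (Th_half a b) = Th_half a b"
  unfolding trn_def Th_half_def by (intro ext) auto

lemma trn_Tv: "trn (Tv a b) = Tv a b"
proof (intro ext)
  fix \<tau> \<rho>
  have c: "(\<rho> \<in> Conf a b \<and> \<tau> \<in> Conf a b \<and> \<rho> a = \<tau> a \<and> \<rho> b = \<tau> b) = (\<tau> \<in> Conf a b \<and> \<rho> \<in> Conf a b \<and> \<tau> a = \<rho> a \<and> \<tau> b = \<rho> b)"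
    by (intro iffI; elim conjE; intro conjI; simp)
  have s: "(\<Sum>x\<in>{a..b}. real_of_int (\<tau> x * \<rho> x)) = (\<Sum>x\<in>{a..b}. real_of_int (\<rho> x * \<tau> x))"
    by (simp add: mult.commute)
  show "trn (Tv a b) \<tau> \<rho> = Tv a b \<tau> \<rho>" unfolding trn_def Tv_def c s ..
qed

lemma trn_T: "trn (Tmat a b) = Tmat a b"
  unfolding Tmat_def trn_mult trn_Th trn_Tv by (simp add: op_mult_assoc)

lemma flip_sym: "k \<le> b \<Longrightarrow> (\<tau> \<in> Conf a b \<and> \<rho> = flip a k \<tau>) \<longleftrightarrow> (\<rho> \<in> Conf a b \<and> \<tau> = flip a k \<rho>)"
  by (metis flip_flip flip_Conf)

lemma trn_A: assumes "a \<le> k" "k < b" shows "trn (Aop a b k) = (\<lambda>\<tau> \<rho>. - Aop a b k \<tau> \<rho>)"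
proof (intro ext)
  fix \<tau> \<rho>
  show "trn (Aop a b k) \<tau> \<rho> = - Aop a b k \<tau> \<rho>"
  proof (cases "\<rho> \<in> Conf a b \<and> \<tau> = flip a k \<rho>")
    case True
    then have "\<tau> \<in> Conf a b \<and> \<rho> = flip a k \<tau>" using flip_sym[of k b \<tau> a \<rho>] assms by simp
    then show ?thesis unfolding trn_def Aop_def using True assms by (simp add: flip_in)
  next
    case False
    then have "\<not> (\<tau> \<in> Conf a b \<and> \<rho> = flip a k \<tau>)" using flip_sym[of k b \<tau> a \<rho>] assms by simp
    then show ?thesis unfolding trn_def Aop_def by (simp only: if_not_P[OF False] if_not_P) simp
  qed
qed

lemma trn_B: assumes "a \<le> k" "k < b" shows "trn (Bop a b k) = Bop a b k"
proof (intro ext)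
  fix \<tau> \<rho>
  show "trn (Bop a b k) \<tau> \<rho> = Bop a b k \<tau> \<rho>"
  proof (cases "\<rho> \<in> Conf a b \<and> \<tau> = flip a k \<rho>")
    case True
    then have "\<tau> \<in> Conf a b \<and> \<rho> = flip a k \<tau>" using flip_sym[of k b \<tau> a \<rho>] assms by simp
    then show ?thesis unfolding trn_def Bop_def using True assms by (simp add: flip_out)
  next
    case False
    then have "\<not> (\<tau> \<in> Conf a b \<and> \<rho> = flip a k \<tau>)" using flip_sym[of k b \<tau> a \<rho>] assms by simp
    then show ?thesis unfolding trn_def Bop_def by (simp only: if_not_P[OF False] if_not_P) simp
  qed
qed

lemma trn_lc: "trn (lc a b \<alpha> \<beta>) = lc a b (\<lambda>j. - \<alpha> j) \<beta>"
proof (intro ext)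
  fix \<tau> \<rho>
  have "trn (lc a b \<alpha> \<beta>) \<tau> \<rho> = (\<Sum>j\<in>{a..<b}. \<alpha> j * trn (Aop a b j) \<tau> \<rho> + \<beta> j * trn (Bop a b j) \<tau> \<rho>)"
    unfolding trn_def lc_def ..
  also have "\<dots> = lc a b (\<lambda>j. - \<alpha> j) \<beta> \<tau> \<rho>"
    unfolding lc_def by (intro sum.cong refl) (simp add: trn_A trn_B)
  finally show "trn (lc a b \<alpha> \<beta>) \<tau> \<rho> = lc a b (\<lambda>j. - \<alpha> j) \<beta> \<tau> \<rho>" .
qed

definition PsiA where "PsiA a b \<alpha> \<beta> = (\<lambda>j. - PhiA a b (\<lambda>j. - \<alpha> j) \<beta> j)"
definition PsiB where "PsiB a b \<alpha> \<beta> = PhiB a b (\<lambda>j. - \<alpha> j) \<beta>"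

lemma T_lc: "op_mult a b (Tmat a b) (lc a b \<alpha> \<beta>) = op_mult a b (lc a b (PsiA a b \<alpha> \<beta>) (PsiB a b \<alpha> \<beta>)) (Tmat a b)"
proof -
  have "op_mult a b (Tmat a b) (lc a b \<alpha> \<beta>) = trn (op_mult a b (lc a b (\<lambda>j. - \<alpha> j) \<beta>) (Tmat a b))"
    unfolding trn_mult trn_T trn_lc by simp
  also have "\<dots> = trn (op_mult a b (Tmat a b) (lc a b (PhiA a b (\<lambda>j. - \<alpha> j) \<beta>) (PhiB a b (\<lambda>j. - \<alpha> j) \<beta>)))"
    unfolding lc_T Phi_eq ..
  also have "\<dots> = op_mult a b (lc a b (PsiA a b \<alpha> \<beta>) (PsiB a b \<alpha> \<beta>)) (Tmat a b)"
    unfolding trn_mult trn_T trn_lc PsiA_def PsiB_def ..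
  finally show ?thesis .
qed

context
  fixes a b :: int
  assumes ab: "a < b"
begin

lemma cnjT_m1_lc: "cnjT a b (-1) (lc a b \<alpha> \<beta>) = lc a b (PsiA a b \<alpha> \<beta>) (PsiB a b \<alpha> \<beta>)"
proof -
  have "cnjT a b (-1) (lc a b \<alpha> \<beta>) = op_mult a b (Tmat a b) (op_mult a b (lc a b \<alpha> \<beta>) (Tinv a b))"
    unfolding cnjT_def using zp1[OF ab] zpm1[OF ab] by simp
  also have "\<dots> = op_mult a b (lc a b (PsiA a b \<alpha> \<beta>) (PsiB a b \<alpha> \<beta>)) (op_mult a b (Tmat a b) (Tinv a b))"
    by (simp only: op_mult_assoc[symmetric] T_lc)
  also have "\<dots> = lc a b (PsiA a b \<alpha> \<beta>) (PsiB a b \<alpha> \<beta>)"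
    using ipT[OF ab] unfolding inv_pair_def by (simp add: op_id_right is_op_lc)
  finally show ?thesis .
qed

lemma cnjT_lc_ex: "\<exists>\<alpha>' \<beta>'. cnjT a b y (lc a b \<alpha> \<beta>) = lc a b \<alpha>' \<beta>'"
proof (induction y arbitrary: \<alpha> \<beta> rule: int_induct[where k = 0])
  case base
  then show ?case using cnjT_0[OF ab] is_op_lc by blast
next
  case (step1 i)
  show ?case unfolding cnjT_succ[OF ab] cnjT_1_lc[OF ab] using step1 by blast
next
  case (step2 i)
  show ?case unfolding cnjT_pred[OF ab] cnjT_m1_lc using step2 by blast
qed

end

lemma op_mult_lin_left: "op_mult a b (\<lambda>\<tau> \<rho>. X \<tau> \<rho> + c * Y \<tau> \<rho>) M = (\<lambda>\<tau> \<rho>. op_mult a b X M \<tau> \<rho> + c * op_mult a b Y M \<tau> \<rho>)"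
  unfolding op_mult_def by (intro ext) (simp add: distrib_right sum.distrib sum_distrib_left mult.assoc)

lemma op_mult_lin_right: "op_mult a b M (\<lambda>\<tau> \<rho>. X \<tau> \<rho> + c * Y \<tau> \<rho>) = (\<lambda>\<tau> \<rho>. op_mult a b M X \<tau> \<rho> + c * op_mult a b M Y \<tau> \<rho>)"
  unfolding op_mult_def by (intro ext) (simp add: distrib_left sum.distrib sum_distrib_left mult.left_commute)

lemma cnjT_lin: "cnjT a b y (\<lambda>\<tau> \<rho>. X \<tau> \<rho> + c * Y \<tau> \<rho>) = (\<lambda>\<tau> \<rho>. cnjT a b y X \<tau> \<rho> + c * cnjT a b y Y \<tau> \<rho>)"
  unfolding cnjT_def op_mult_lin_left op_mult_lin_right ..

lemma cnjT_zero: "cnjT a b y (\<lambda>\<tau> \<rho>. 0) = (\<lambda>\<tau> \<rho>. 0)"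
  unfolding cnjT_def op_mult_def by simp

lemma lc_lin: "lc a b (\<lambda>j. \<alpha> j + c * \<alpha>' j) (\<lambda>j. \<beta> j + c * \<beta>' j) = (\<lambda>\<tau> \<rho>. lc a b \<alpha> \<beta> \<tau> \<rho> + c * lc a b \<alpha>' \<beta>' \<tau> \<rho>)"
  unfolding lc_def by (intro ext) (simp add: distrib_right distrib_left sum.distrib sum_distrib_left mult.assoc)

lemma lc_zero: "(\<And>j. a \<le> j \<Longrightarrow> j < b \<Longrightarrow> \<alpha> j = 0) \<Longrightarrow> (\<And>j. a \<le> j \<Longrightarrow> j < b \<Longrightarrow> \<beta> j = 0) \<Longrightarrow> lc a b \<alpha> \<beta> = (\<lambda>\<tau> \<rho>. 0)"
  unfolding lc_def by (intro ext sum.neutral) auto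

lemma psi_AB: "psi_gen a b k = (\<lambda>\<tau> \<rho>. (- Aop a b k \<tau> \<rho> + \<i> * Bop a b k \<tau> \<rho>) / s2)"
proof (intro ext)
  fix \<tau> \<rho> show "psi_gen a b k \<tau> \<rho> = (- Aop a b k \<tau> \<rho> + \<i> * Bop a b k \<tau> \<rho>) / s2"
  proof (cases "\<rho> \<in> Conf a b \<and> \<tau> = flip a k \<rho>")
    case True then show ?thesis unfolding psi_gen_def Aop_def Bop_def by simp
  next
    case False then show ?thesis unfolding psi_gen_def Aop_def Bop_def by (simp only: if_not_P[OF False]) simp
  qed
qed
lemma psis_AB: "psis_gen a b k = (\<lambda>\<tau> \<rho>. (- \<i> * Aop a b k \<tau> \<rho> + Bop a b k \<tau> \<rho>) / s2)"
proof (intro ext)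
  fix \<tau> \<rho> show "psis_gen a b k \<tau> \<rho> = (- \<i> * Aop a b k \<tau> \<rho> + Bop a b k \<tau> \<rho>) / s2"
  proof (cases "\<rho> \<in> Conf a b \<and> \<tau> = flip a k \<rho>")
    case True then show ?thesis unfolding psis_gen_def Aop_def Bop_def by simp
  next
    case False then show ?thesis unfolding psis_gen_def Aop_def Bop_def by (simp only: if_not_P[OF False]) simp
  qed
qed

lemma s2sq: "s2 * s2 = 2"
  by (simp flip: of_real_mult)

lemma lc_CliffGen: "lc a b \<alpha> \<beta> \<in> CliffGen a b"
  unfolding CliffGen_def
proof (intro CollectI exI ext)
  fix \<tau> \<rho>
  show "lc a b \<alpha> \<beta> \<tau> \<rho> = (\<Sum>k\<in>{a..<b}. (- \<alpha> k - \<i> * \<beta> k) / s2 * psi_gen a b k \<tau> \<rho> + (\<i> * \<alpha> k + \<beta> k) / s2 * psis_gen a b k \<tau> \<rho>)"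
    unfolding lc_def psi_AB psis_AB
  proof (intro sum.cong refl)
    fix k
    have "s2 \<noteq> 0" by simp
    then show "\<alpha> k * Aop a b k \<tau> \<rho> + \<beta> k * Bop a b k \<tau> \<rho> =
         (- \<alpha> k - \<i> * \<beta> k) / s2 * ((- Aop a b k \<tau> \<rho> + \<i> * Bop a b k \<tau> \<rho>) / s2) +
         (\<i> * \<alpha> k + \<beta> k) / s2 * ((- \<i> * Aop a b k \<tau> \<rho> + Bop a b k \<tau> \<rho>) / s2)"
      by (simp add: field_simps s2sq)
  qed
qed

definition dl :: "int \<Rightarrow> complex \<Rightarrow> int \<Rightarrow> complex" where "dl k c = (\<lambda>j. if j = k then c else 0)"

lemma lc_dl: "a \<le> k \<Longrightarrow> k < b \<Longrightarrow> lc a b (dl k c) (dl k d) = (\<lambda>\<tau> \<rho>. c * Aop a b k \<tau> \<rho> + d * Bop a b k \<tau> \<rho>)"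
  unfolding lc_def dl_def by (intro ext) (simp add: sum.distrib sum_delta_k)

lemma psi_lc: "a \<le> k \<Longrightarrow> k < b \<Longrightarrow> psi_gen a b k = lc a b (dl k (- 1 / s2)) (dl k (\<i> / s2))"
  unfolding psi_AB lc_dl by (intro ext) (simp add: field_simps)
lemma psis_lc: "a \<le> k \<Longrightarrow> k < b \<Longrightarrow> psis_gen a b k = lc a b (dl k (- \<i> / s2)) (dl k (1 / s2))"
  unfolding psis_AB lc_dl by (intro ext) (simp add: field_simps)


definition XiA :: "int \<Rightarrow> int \<Rightarrow> int \<Rightarrow> int \<Rightarrow> complex" where
  "XiA a b x = (if x = a then dl a (- 1 / s2) else if x = b then dl (b-1) (\<i> * (1 - 1 / s2))
     else (\<lambda>j. if j = x - 1 then ((2 - s2) + s2 * \<i>) / 4 else if j = x then - ((2 + s2) + s2 * \<i>) / 4 else 0))"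
definition XiB :: "int \<Rightarrow> int \<Rightarrow> int \<Rightarrow> int \<Rightarrow> complex" where
  "XiB a b x = (if x = a then dl a (- (1 - 1 / s2)) else if x = b then dl (b-1) (\<i> / s2)
     else (\<lambda>j. if j = x - 1 then (s2 + (2 + s2) * \<i>) / 4 else if j = x then - (s2 + (2 - s2) * \<i>) / 4 else 0))"
definition XsA :: "int \<Rightarrow> int \<Rightarrow> int \<Rightarrow> int \<Rightarrow> complex" where
  "XsA a b x = (if x = a then dl a (- \<i> / s2) else if x = b then dl (b-1) (1 - 1 / s2)
     else (\<lambda>j. if j = x - 1 then (s2 + (2 - s2) * \<i>) / 4 else if j = x then - (s2 + (2 + s2) * \<i>) / 4 else 0))"
definition XsB :: "int \<Rightarrow> int \<Rightarrow> int \<Rightarrow> int \<Rightarrow> complex" where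
  "XsB a b x = (if x = a then dl a (- \<i> * (1 - 1 / s2)) else if x = b then dl (b-1) (1 / s2)
     else (\<lambda>j. if j = x - 1 then ((2 + s2) + s2 * \<i>) / 4 else if j = x then - ((2 - s2) + s2 * \<i>) / 4 else 0))"

definition etaBL :: complex where "etaBL = - (1 + \<i>) / s2"
definition etaBR :: complex where "etaBR = (\<i> - 1) / s2"
definition etaTL :: complex where "etaTL = (1 - \<i>) / s2"
definition etaTR :: complex where "etaTR = (1 + \<i>) / s2"

lemma s2nz: "s2 \<noteq> 0" by simp
lemma s2cube: "s2 ^ 3 = 2 * s2" by (simp add: power3_eq_cube s2sq)
lemma s2pow2: "s2 ^ 2 = 2" by (simp add: power2_eq_square s2sq)
lemma s2pow4: "s2 ^ 4 = 4" by (metis (no_types) mult_2_right numeral_Bit0 power_add s2pow2 power2_eq_square num_double numeral_times_numeral)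

lemma s2s2': "s2 * (s2 * x) = 2 * x" by (simp add: mult.assoc[symmetric] s2sq)

lemma R1:
  assumes "a \<le> k" "k < b" "a \<le> j" "j < b"
  shows "dl k (- 1 / s2) j + etaBL * dl k (- \<i> / s2) j = XiA a b k j + etaBL * XsA a b k j"
    "dl k (\<i> / s2) j + etaBL * dl k (1 / s2) j = XiB a b k j + etaBL * XsB a b k j"
  using assms unfolding XiA_def XiB_def XsA_def XsB_def dl_def etaBL_def
  by (auto simp: field_simps s2sq s2cube s2pow2 s2pow4 s2s2')

lemma R2:
  assumes "a \<le> k" "k < b" "a \<le> j" "j < b"
  shows "dl k (- 1 / s2) j + etaBR * dl k (- \<i> / s2) j = XiA a b (k+1) j + etaBR * XsA a b (k+1) j"
    "dl k (\<i> / s2) j + etaBR * dl k (1 / s2) j = XiB a b (k+1) j + etaBR * XsB a b (k+1) j"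
  using assms unfolding XiA_def XiB_def XsA_def XsB_def dl_def etaBR_def
  by (auto simp: field_simps s2sq s2cube s2pow2 s2pow4 s2s2')

lemma R3:
  assumes "a \<le> k" "k < b" "a \<le> j" "j < b"
  shows "PhiA a b (dl k (- 1 / s2)) (dl k (\<i> / s2)) j + etaTL * PhiA a b (dl k (- \<i> / s2)) (dl k (1 / s2)) j = XiA a b k j + etaTL * XsA a b k j"
    "PhiB a b (dl k (- 1 / s2)) (dl k (\<i> / s2)) j + etaTL * PhiB a b (dl k (- \<i> / s2)) (dl k (1 / s2)) j = XiB a b k j + etaTL * XsB a b k j"
  using assms unfolding XiA_def XiB_def XsA_def XsB_def dl_def etaTL_def PhiA_def PhiB_def ea_def eb_def
  by (auto simp: field_simps s2sq s2cube s2pow2 s2pow4 s2s2')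

lemma R4:
  assumes "a \<le> k" "k < b" "a \<le> j" "j < b"
  shows "PhiA a b (dl k (- 1 / s2)) (dl k (\<i> / s2)) j + etaTR * PhiA a b (dl k (- \<i> / s2)) (dl k (1 / s2)) j = XiA a b (k+1) j + etaTR * XsA a b (k+1) j"
    "PhiB a b (dl k (- 1 / s2)) (dl k (\<i> / s2)) j + etaTR * PhiB a b (dl k (- \<i> / s2)) (dl k (1 / s2)) j = XiB a b (k+1) j + etaTR * XsB a b (k+1) j"
  using assms unfolding XiA_def XiB_def XsA_def XsB_def dl_def etaTR_def PhiA_def PhiB_def ea_def eb_def
  by (auto simp: field_simps s2sq s2cube s2pow2 s2pow4 s2s2')

lemma R5: "a \<le> j \<Longrightarrow> j < b \<Longrightarrow> XiA a b a j + \<i> * XsA a b a j = 0 \<and> XiB a b a j + \<i> * XsB a b a j = 0"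
  unfolding XiA_def XiB_def XsA_def XsB_def dl_def by (auto simp: field_simps)

lemma R6: "a < b \<Longrightarrow> a \<le> j \<Longrightarrow> j < b \<Longrightarrow> XiA a b b j + (- \<i>) * XsA a b b j = 0 \<and> XiB a b b j + (- \<i>) * XsB a b b j = 0"
  unfolding XiA_def XiB_def XsA_def XsB_def dl_def by (auto simp: field_simps)


lemma cmod_half: "cmod (Complex u w) = 1/2 \<longleftrightarrow> u^2 + w^2 = 1/4"
proof -
  have "cmod (Complex u w) = sqrt (u^2 + w^2)" by (simp add: complex_norm)
  moreover have "sqrt (u^2 + w^2) = 1/2 \<longleftrightarrow> u^2 + w^2 = 1/4"
  proof
    assume h: "sqrt (u^2 + w^2) = 1/2"
    have "u^2 + w^2 = (sqrt (u^2 + w^2))^2" by simp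
    also have "\<dots> = (1/2)^2" unfolding h ..
    finally show "u^2 + w^2 = 1/4" by (simp add: power2_eq_square)
  next
    assume "u^2 + w^2 = 1/4"
    then show "sqrt (u^2 + w^2) = 1/2" by (intro real_sqrt_unique) (auto simp: power2_eq_square)
  qed
  ultimately show ?thesis by simp
qed

lemma int_G1:
  fixes m n :: int
  assumes "m * m + n * n + n = 0"
  shows "m = 0 \<and> (n = 0 \<or> n = -1)"
proof -
  have n1: "n * n + n \<ge> 0"
  proof (cases "n \<ge> 0")
    case True then show ?thesis by simp
  next
    case False
    then have "n + 1 \<le> 0" by simp
    then have "n * (n + 1) \<ge> 0" using False by (simp add: mult_nonpos_nonpos)
    then show ?thesis by (simp add: algebra_simps)
  qed
  have m1: "m * m \<ge> 0" by simp
  have "m * m = 0" using assms n1 m1 by linarith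
  then have "m = 0" by simp
  moreover have "n * (n + 1) = 0" using assms \<open>m * m = 0\<close> by (simp add: algebra_simps)
  then have "n = 0 \<or> n = -1" by auto
  ultimately show ?thesis by simp
qed

lemma real_G2:
  fixes m n :: int
  assumes "(of_int m)^2 + (of_int n + 1/2)^2 = (1/4::real)"
  shows "m = 0 \<and> (n = 0 \<or> n = -1)"
proof -
  have "real_of_int (m * m + n * n + n) = 0" using assms by (simp add: power2_eq_square algebra_simps)
  then have "m * m + n * n + n = 0" by linarith
  then show ?thesis by (rule int_G1)
qed

lemma adj:
  assumes p: "p = Complex (of_int k + 1/2) (of_int y + 1/2)"
    and v: "v = Complex (of_int X) (of_int Y)"
    and e: "edge a b z" and d1: "cmod (z - v) = 1/2" and d2: "cmod (z - p) = 1/2"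
  shows "(X = k \<or> X = k + 1) \<and> (Y = y \<or> Y = y + 1) \<and>
         (z = Complex (of_int k + 1/2) (of_int Y) \<or> z = Complex (of_int X) (of_int y + 1/2))"
proof -
  from e consider (h) k' y' where "z = Complex (of_int k' + 1/2) (of_int y')"
    | (vv) x' y' where "z = Complex (of_int x') (of_int y' + 1/2)"
    unfolding edge_def hedge_def vedge_def by blast
  then show ?thesis
  proof cases
    case h
    have zp: "z - p = Complex (of_int (k' - k)) (of_int (y' - y) - 1/2)" using p h by (simp add: complex_eq_iff)
    have A: "(of_int (k' - k))^2 + (of_int (y - y') + 1/2)^2 = (1/4::real)"
      using d2[unfolded zp cmod_half] by (simp add: power2_eq_square algebra_simps)
    from real_G2[OF A] have kk: "k' = k" and yy: "y' = y \<or> y' = y + 1" by auto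
    have zv: "z - v = Complex (of_int (k' - X) + 1/2) (of_int (y' - Y))" using v h by (simp add: complex_eq_iff)
    have B: "(of_int (y' - Y))^2 + (of_int (k' - X) + 1/2)^2 = (1/4::real)"
      using d1[unfolded zv cmod_half] by (simp add: power2_eq_square algebra_simps)
    from real_G2[OF B] have "Y = y'" and "X = k' \<or> X = k' + 1" by auto
    then show ?thesis using kk yy h by auto
  next
    case vv
    have zp: "z - p = Complex (of_int (x' - k) - 1/2) (of_int (y' - y))" using p vv by (simp add: complex_eq_iff)
    have A: "(of_int (y' - y))^2 + (of_int (k - x') + 1/2)^2 = (1/4::real)"
      using d2[unfolded zp cmod_half] by (simp add: power2_eq_square algebra_simps)
    from real_G2[OF A] have yy: "y' = y" and kk: "x' = k \<or> x' = k + 1" by auto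
    have zv: "z - v = Complex (of_int (x' - X)) (of_int (y' - Y) + 1/2)" using v vv by (simp add: complex_eq_iff)
    have B: "(of_int (x' - X))^2 + (of_int (y' - Y) + 1/2)^2 = (1/4::real)"
      using d1[unfolded zv cmod_half] by (simp add: power2_eq_square algebra_simps)
    from real_G2[OF B] have "X = x'" and "Y = y' \<or> Y = y' + 1" by auto
    then show ?thesis using kk yy vv by auto
  qed
qed


abbreviation hpt :: "int \<Rightarrow> int \<Rightarrow> complex" where "hpt k y \<equiv> Complex (of_int k + 1/2) (of_int y)"
abbreviation vpt :: "int \<Rightarrow> int \<Rightarrow> complex" where "vpt x y \<equiv> Complex (of_int x) (of_int y + 1/2)"
abbreviation fpt :: "int \<Rightarrow> int \<Rightarrow> complex" where "fpt k y \<equiv> Complex (of_int k + 1/2) (of_int y + 1/2)"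
abbreviation vtx :: "int \<Rightarrow> int \<Rightarrow> complex" where "vtx x y \<equiv> Complex (of_int x) (of_int y)"

lemma half_neq: "(of_int k + 1/2 :: real) \<noteq> of_int x"
proof
  assume "(of_int k + 1/2 :: real) = of_int x"
  then have "real_of_int (2 * k + 1) = real_of_int (2 * x)" by simp
  then have "2 * k + 1 = 2 * x" by linarith
  then show False by presburger
qed

lemma half_inj: "(of_int k + 1/2 :: real) = of_int k' + 1/2 \<longleftrightarrow> k = k'" by simp

lemma floor_half[simp]: "\<lfloor>(of_int k + 1/2 :: real)\<rfloor> = k"
  by (simp add: floor_eq_iff)

lemma hedge_h: "hedge a b (hpt k y) \<longleftrightarrow> a \<le> k \<and> k < b"
  unfolding hedge_def by auto
lemma vedge_v: "vedge a b (vpt x y) \<longleftrightarrow> a \<le> x \<and> x \<le> b"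
  unfolding vedge_def by auto
lemma not_vedge_h: "\<not> vedge a b (hpt k y)"
  unfolding vedge_def using half_neq by auto
lemma not_hedge_v: "\<not> hedge a b (vpt x y)"
  unfolding hedge_def using half_neq by (auto simp: eq_commute)

definition psiW :: "int \<Rightarrow> int \<Rightarrow> complex \<Rightarrow> op" where
  "psiW a b z = (if hedge a b z then cnjT a b \<lfloor>Im z\<rfloor> (psi_gen a b \<lfloor>Re z\<rfloor>)
     else if vedge a b z then cnjT a b \<lfloor>Im z\<rfloor> (lc a b (XiA a b \<lfloor>Re z\<rfloor>) (XiB a b \<lfloor>Re z\<rfloor>)) else op_zero)"
definition psisW :: "int \<Rightarrow> int \<Rightarrow> complex \<Rightarrow> op" where
  "psisW a b z = (if hedge a b z then cnjT a b \<lfloor>Im z\<rfloor> (psis_gen a b \<lfloor>Re z\<rfloor>)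
     else if vedge a b z then cnjT a b \<lfloor>Im z\<rfloor> (lc a b (XsA a b \<lfloor>Re z\<rfloor>) (XsB a b \<lfloor>Re z\<rfloor>)) else op_zero)"

lemma psiW_h: "a \<le> k \<Longrightarrow> k < b \<Longrightarrow> psiW a b (hpt k y) = cnjT a b y (psi_gen a b k)"
  unfolding psiW_def by (simp add: hedge_h)
lemma psisW_h: "a \<le> k \<Longrightarrow> k < b \<Longrightarrow> psisW a b (hpt k y) = cnjT a b y (psis_gen a b k)"
  unfolding psisW_def by (simp add: hedge_h)
lemma psiW_v: "a \<le> x \<Longrightarrow> x \<le> b \<Longrightarrow> psiW a b (vpt x y) = cnjT a b y (lc a b (XiA a b x) (XiB a b x))"
  unfolding psiW_def by (simp add: not_hedge_v vedge_v)
lemma psisW_v: "a \<le> x \<Longrightarrow> x \<le> b \<Longrightarrow> psisW a b (vpt x y) = cnjT a b y (lc a b (XsA a b x) (XsB a b x))"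
  unfolding psisW_def by (simp add: not_hedge_v vedge_v)

lemma rel_gen:
  assumes "\<And>j. a \<le> j \<Longrightarrow> j < b \<Longrightarrow> \<alpha> j + \<eta> * \<alpha>' j = \<gamma> j + \<eta> * \<gamma>' j"
    "\<And>j. a \<le> j \<Longrightarrow> j < b \<Longrightarrow> \<beta> j + \<eta> * \<beta>' j = \<delta> j + \<eta> * \<delta>' j"
  shows "op_add (cnjT a b y (lc a b \<alpha> \<beta>)) (op_scale \<eta> (cnjT a b y (lc a b \<alpha>' \<beta>')))
       = op_add (cnjT a b y (lc a b \<gamma> \<delta>)) (op_scale \<eta> (cnjT a b y (lc a b \<gamma>' \<delta>')))"
proof -
  have "op_add (cnjT a b y (lc a b \<alpha> \<beta>)) (op_scale \<eta> (cnjT a b y (lc a b \<alpha>' \<beta>')))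
      = cnjT a b y (lc a b (\<lambda>j. \<alpha> j + \<eta> * \<alpha>' j) (\<lambda>j. \<beta> j + \<eta> * \<beta>' j))"
    unfolding op_add_def op_scale_def lc_lin cnjT_lin ..
  also have "\<dots> = cnjT a b y (lc a b (\<lambda>j. \<gamma> j + \<eta> * \<gamma>' j) (\<lambda>j. \<delta> j + \<eta> * \<delta>' j))"
    using assms by (intro arg_cong[where f="cnjT a b y"] lc_cong) auto
  also have "\<dots> = op_add (cnjT a b y (lc a b \<gamma> \<delta>)) (op_scale \<eta> (cnjT a b y (lc a b \<gamma>' \<delta>')))"
    unfolding op_add_def op_scale_def lc_lin cnjT_lin ..
  finally show ?thesis .
qed

lemma cmod_diag: "u^2 = 1/4 \<Longrightarrow> w^2 = 1/4 \<Longrightarrow> cmod (Complex u w) = sqrt 2 / 2"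
proof -
  assume "u^2 = 1/4" "w^2 = 1/4"
  then have "cmod (Complex u w) = sqrt (1/2)" by (simp add: complex_norm)
  also have "sqrt (1/2) = sqrt 2 / 2" by (rule real_sqrt_unique) (auto simp: power2_eq_square)
  finally show ?thesis .
qed

lemma eta_gen: "u^2 = 1/4 \<Longrightarrow> w^2 = 1/4 \<Longrightarrow> \<i> * complex_of_real (cmod (Complex u w)) / Complex u w = \<i> * (s2 / 2) / (complex_of_real u + \<i> * complex_of_real w)"
proof -
  assume "u^2 = 1/4" "w^2 = 1/4"
  then have c: "cmod (Complex u w) = sqrt 2 / 2" by (rule cmod_diag)
  show ?thesis unfolding c by (simp add: Complex_eq)
qed

lemma div_helper: "(D::complex) \<noteq> 0 \<Longrightarrow> N = E * D \<Longrightarrow> N / D = E" by simp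

lemma diffvp: "vtx X Y - fpt k y = Complex (of_int (X - k) - 1/2) (of_int (Y - y) - 1/2)"
  by (simp add: complex_eq_iff)

lemma eta_BL: "\<i> * complex_of_real (cmod (vtx k y - fpt k y)) / (vtx k y - fpt k y) = etaBL"
proof -
  have "\<i> * complex_of_real (cmod (vtx k y - fpt k y)) / (vtx k y - fpt k y) = \<i> * (s2 / 2) / (complex_of_real (-1/2) + \<i> * complex_of_real (-1/2))"
    unfolding diffvp by (subst eta_gen) (simp_all add: power2_eq_square)
  also have "\<dots> = etaBL" unfolding etaBL_def
  proof (rule div_helper)
    show "complex_of_real (-1/2) + \<i> * complex_of_real (-1/2) \<noteq> 0" by (simp add: complex_eq_iff)
    show "\<i> * (s2 / 2) = (- (1 + \<i>) / s2) * (complex_of_real (-1/2) + \<i> * complex_of_real (-1/2))"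
      by (simp add: field_simps s2sq)
  qed
  finally show ?thesis .
qed

lemma eta_BR: "\<i> * complex_of_real (cmod (vtx (k+1) y - fpt k y)) / (vtx (k+1) y - fpt k y) = etaBR"
proof -
  have "\<i> * complex_of_real (cmod (vtx (k+1) y - fpt k y)) / (vtx (k+1) y - fpt k y) = \<i> * (s2 / 2) / (complex_of_real (1/2) + \<i> * complex_of_real (-1/2))"
    unfolding diffvp by (subst eta_gen) (simp_all add: power2_eq_square)
  also have "\<dots> = etaBR" unfolding etaBR_def
  proof (rule div_helper)
    show "complex_of_real (1/2) + \<i> * complex_of_real (-1/2) \<noteq> 0" by (simp add: complex_eq_iff)
    show "\<i> * (s2 / 2) = ((\<i> - 1) / s2) * (complex_of_real (1/2) + \<i> * complex_of_real (-1/2))"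
      by (simp add: field_simps s2sq)
  qed
  finally show ?thesis .
qed

lemma eta_TL: "\<i> * complex_of_real (cmod (vtx k (y+1) - fpt k y)) / (vtx k (y+1) - fpt k y) = etaTL"
proof -
  have "\<i> * complex_of_real (cmod (vtx k (y+1) - fpt k y)) / (vtx k (y+1) - fpt k y) = \<i> * (s2 / 2) / (complex_of_real (-1/2) + \<i> * complex_of_real (1/2))"
    unfolding diffvp by (subst eta_gen) (simp_all add: power2_eq_square)
  also have "\<dots> = etaTL" unfolding etaTL_def
  proof (rule div_helper)
    show "complex_of_real (-1/2) + \<i> * complex_of_real (1/2) \<noteq> 0" by (simp add: complex_eq_iff)
    show "\<i> * (s2 / 2) = ((1 - \<i>) / s2) * (complex_of_real (-1/2) + \<i> * complex_of_real (1/2))"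
      by (simp add: field_simps s2sq)
  qed
  finally show ?thesis .
qed

lemma eta_TR: "\<i> * complex_of_real (cmod (vtx (k+1) (y+1) - fpt k y)) / (vtx (k+1) (y+1) - fpt k y) = etaTR"
proof -
  have "\<i> * complex_of_real (cmod (vtx (k+1) (y+1) - fpt k y)) / (vtx (k+1) (y+1) - fpt k y) = \<i> * (s2 / 2) / (complex_of_real (1/2) + \<i> * complex_of_real (1/2))"
    unfolding diffvp by (subst eta_gen) (simp_all add: power2_eq_square)
  also have "\<dots> = etaTR" unfolding etaTR_def
  proof (rule div_helper)
    show "complex_of_real (1/2) + \<i> * complex_of_real (1/2) \<noteq> 0" by (simp add: complex_eq_iff)
    show "\<i> * (s2 / 2) = ((1 + \<i>) / s2) * (complex_of_real (1/2) + \<i> * complex_of_real (1/2))"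
      by (simp add: field_simps s2sq)
  qed
  finally show ?thesis .
qed


context
  fixes a b :: int
  assumes ab: "a < b"
begin

lemma W_BL: assumes "a \<le> k" "k < b"
  shows "op_add (psiW a b (hpt k y)) (op_scale etaBL (psisW a b (hpt k y)))
       = op_add (psiW a b (vpt k y)) (op_scale etaBL (psisW a b (vpt k y)))"
proof -
  have kb: "k \<le> b" using assms by simp
  show ?thesis unfolding psiW_h[OF assms] psisW_h[OF assms] psiW_v[OF assms(1) kb] psisW_v[OF assms(1) kb] psi_lc[OF assms] psis_lc[OF assms]
    by (rule rel_gen) (erule (1) R1(1)[OF assms], erule (1) R1(2)[OF assms])
qed

lemma W_BR: assumes "a \<le> k" "k < b"
  shows "op_add (psiW a b (hpt k y)) (op_scale etaBR (psisW a b (hpt k y)))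
       = op_add (psiW a b (vpt (k+1) y)) (op_scale etaBR (psisW a b (vpt (k+1) y)))"
proof -
  have k1: "a \<le> k + 1" "k + 1 \<le> b" using assms by auto
  show ?thesis unfolding psiW_h[OF assms] psisW_h[OF assms] psiW_v[OF k1] psisW_v[OF k1] psi_lc[OF assms] psis_lc[OF assms]
    by (rule rel_gen) (erule (1) R2(1)[OF assms], erule (1) R2(2)[OF assms])
qed

lemma W_TL: assumes "a \<le> k" "k < b"
  shows "op_add (psiW a b (hpt k (y+1))) (op_scale etaTL (psisW a b (hpt k (y+1))))
       = op_add (psiW a b (vpt k y)) (op_scale etaTL (psisW a b (vpt k y)))"
proof -
  have kb: "k \<le> b" using assms by simp
  show ?thesis unfolding psiW_h[OF assms] psisW_h[OF assms] psiW_v[OF assms(1) kb] psisW_v[OF assms(1) kb] psi_lc[OF assms] psis_lc[OF assms]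
     cnjT_succ[OF ab] cnjT_1_lc[OF ab]
    by (rule rel_gen) (erule (1) R3(1)[OF assms], erule (1) R3(2)[OF assms])
qed

lemma W_TR: assumes "a \<le> k" "k < b"
  shows "op_add (psiW a b (hpt k (y+1))) (op_scale etaTR (psisW a b (hpt k (y+1))))
       = op_add (psiW a b (vpt (k+1) y)) (op_scale etaTR (psisW a b (vpt (k+1) y)))"
proof -
  have k1: "a \<le> k + 1" "k + 1 \<le> b" using assms by auto
  show ?thesis unfolding psiW_h[OF assms] psisW_h[OF assms] psiW_v[OF k1] psisW_v[OF k1] psi_lc[OF assms] psis_lc[OF assms]
     cnjT_succ[OF ab] cnjT_1_lc[OF ab]
    by (rule rel_gen) (erule (1) R4(1)[OF assms], erule (1) R4(2)[OF assms])
qed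

lemma W_all:
  assumes "a \<le> k" "k < b" "X = k \<or> X = k + 1" "Y = y \<or> Y = y + 1"
  shows "op_add (psiW a b (hpt k Y)) (op_scale (\<i> * complex_of_real (cmod (vtx X Y - fpt k y)) / (vtx X Y - fpt k y)) (psisW a b (hpt k Y)))
       = op_add (psiW a b (vpt X y)) (op_scale (\<i> * complex_of_real (cmod (vtx X Y - fpt k y)) / (vtx X Y - fpt k y)) (psisW a b (vpt X y)))"
  using assms(3,4)
proof (elim disjE)
  assume "X = k" "Y = y" then show ?thesis using W_BL[OF assms(1,2)] eta_BL by simp
next
  assume "X = k" "Y = y + 1" then show ?thesis using W_TL[OF assms(1,2)] eta_TL by simp
next
  assume "X = k + 1" "Y = y" then show ?thesis using W_BR[OF assms(1,2)] eta_BR by simp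
next
  assume "X = k + 1" "Y = y + 1" then show ?thesis using W_TR[OF assms(1,2)] eta_TR by simp
qed

end

lemma cp_explicit:
  assumes "a \<le> k" "k < b" "X = k \<or> X = k + 1" "Y = y \<or> Y = y + 1"
  shows "corner_pair a b (hpt k Y) (vpt X y) (vtx X Y) (fpt k y)"
proof -
  have e1: "edge a b (hpt k Y)" unfolding edge_def using assms hedge_h by auto
  have e2: "edge a b (vpt X y)" unfolding edge_def using assms vedge_v by auto
  have v: "vertex a b (vtx X Y)" unfolding vertex_def using assms by auto
  have f: "face a b (fpt k y)" unfolding face_def using assms by auto
  have d1: "hpt k Y - vtx X Y = Complex (of_int (k - X) + 1/2) 0" by (simp add: complex_eq_iff)
  have d2: "vpt X y - vtx X Y = Complex 0 (of_int (y - Y) + 1/2)" by (simp add: complex_eq_iff)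
  have d3: "hpt k Y - fpt k y = Complex 0 (of_int (Y - y) - 1/2)" by (simp add: complex_eq_iff)
  have d4: "vpt X y - fpt k y = Complex (of_int (X - k) - 1/2) 0" by (simp add: complex_eq_iff)
  show ?thesis unfolding corner_pair_def d1 d2 d3 d4 cmod_half using e1 e2 v f assms
    by (auto simp: power2_eq_square)
qed

lemma cp_class:
  assumes "corner_pair a b z1 z2 v p"
  shows "\<exists>k y X Y. a \<le> k \<and> k < b \<and> p = fpt k y \<and> v = vtx X Y \<and> (X = k \<or> X = k + 1) \<and> (Y = y \<or> Y = y + 1)
     \<and> (z1 = hpt k Y \<or> z1 = vpt X y) \<and> (z2 = hpt k Y \<or> z2 = vpt X y)"
proof -
  from assms obtain k y where ky: "a \<le> k" "k < b" "p = fpt k y" unfolding corner_pair_def face_def by auto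
  from assms obtain X Y where XY: "v = vtx X Y" unfolding corner_pair_def vertex_def by auto
  have A1: "(X = k \<or> X = k + 1) \<and> (Y = y \<or> Y = y + 1) \<and> (z1 = hpt k Y \<or> z1 = vpt X y)"
    using assms ky XY unfolding corner_pair_def by (intro adj[of p k y v X Y a b z1]) auto
  have A2: "z2 = hpt k Y \<or> z2 = vpt X y"
    using assms ky XY adj[of p k y v X Y a b z2] unfolding corner_pair_def by auto
  show ?thesis using ky XY A1 A2 by blast
qed


lemma add_conj: "op_add (cnjT a b y (lc a b \<alpha> \<beta>)) (op_scale \<eta> (cnjT a b y (lc a b \<alpha>' \<beta>')))
      = cnjT a b y (lc a b (\<lambda>j. \<alpha> j + \<eta> * \<alpha>' j) (\<lambda>j. \<beta> j + \<eta> * \<beta>' j))"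
  unfolding op_add_def op_scale_def lc_lin cnjT_lin ..

lemma lin2:
  fixes u w u' w' e1 e2 :: complex
  assumes "u + e1 * w = u' + e1 * w'" "u + e2 * w = u' + e2 * w'" "e1 \<noteq> e2"
  shows "u = u' \<and> w = w'"
proof -
  have "(u + e1*w) - (u + e2*w) = (u' + e1*w') - (u' + e2*w')" using assms(1,2) by simp
  then have "(e1 - e2) * w = (e1 - e2) * w'" by (simp add: algebra_simps)
  then have "w = w'" using assms(3) by simp
  then show ?thesis using assms by simp
qed

lemma eta_ne: "etaBL \<noteq> etaTL" "etaBR \<noteq> etaTR"
proof -
  have 1: "etaBL * s2 = - (1 + \<i>)" "etaTL * s2 = 1 - \<i>" "etaBR * s2 = \<i> - 1" "etaTR * s2 = 1 + \<i>"
    unfolding etaBL_def etaTL_def etaBR_def etaTR_def by simp_all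
  show "etaBL \<noteq> etaTL"
  proof
    assume "etaBL = etaTL" then have "- (1 + \<i>) = 1 - \<i>" using 1 by metis
    then show False by (simp add: complex_eq_iff)
  qed
  show "etaBR \<noteq> etaTR"
  proof
    assume "etaBR = etaTR" then have "\<i> - 1 = 1 + \<i>" using 1 by metis
    then show False by (simp add: complex_eq_iff)
  qed
qed

context
  fixes a b :: int
  assumes ab: "a < b"
begin

lemma fc_exists: "fermion_conds a b (psiW a b) (psisW a b)"
  unfolding fermion_conds_def
proof (intro conjI allI impI)
  fix z assume "\<not> edge a b z"
  then show "psiW a b z = op_zero" "psisW a b z = op_zero" unfolding psiW_def psisW_def edge_def by auto
next
  fix z assume "edge a b z"
  then consider (h) k y where "a \<le> k" "k < b" "z = hpt k y" | (v) x y where "a \<le> x" "x \<le> b" "z = vpt x y"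
    unfolding edge_def hedge_def vedge_def by blast
  then have "psiW a b z \<in> CliffGen a b \<and> psisW a b z \<in> CliffGen a b"
  proof cases
    case h
    obtain \<alpha> \<beta> where 1: "cnjT a b y (psi_gen a b k) = lc a b \<alpha> \<beta>" using cnjT_lc_ex[OF ab] psi_lc[OF h(1,2)] by metis
    obtain \<alpha>' \<beta>' where 2: "cnjT a b y (psis_gen a b k) = lc a b \<alpha>' \<beta>'" using cnjT_lc_ex[OF ab] psis_lc[OF h(1,2)] by metis
    show ?thesis unfolding h(3) psiW_h[OF h(1,2)] psisW_h[OF h(1,2)] 1 2 by (simp add: lc_CliffGen)
  next
    case v
    obtain \<alpha> \<beta> where 1: "cnjT a b y (lc a b (XiA a b x) (XiB a b x)) = lc a b \<alpha> \<beta>" using cnjT_lc_ex[OF ab] by metis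
    obtain \<alpha>' \<beta>' where 2: "cnjT a b y (lc a b (XsA a b x) (XsB a b x)) = lc a b \<alpha>' \<beta>'" using cnjT_lc_ex[OF ab] by metis
    show ?thesis unfolding v(3) psiW_v[OF v(1,2)] psisW_v[OF v(1,2)] 1 2 by (simp add: lc_CliffGen)
  qed
  then show "psiW a b z \<in> CliffGen a b" "psisW a b z \<in> CliffGen a b" by auto
next
  fix k y :: int assume "a \<le> k \<and> k < b"
  then show "psiW a b (hpt k y) = op_mult a b (op_zpow a b (Tmat a b) (- y)) (op_mult a b (psi_gen a b k) (op_zpow a b (Tmat a b) y))"
    "psisW a b (hpt k y) = op_mult a b (op_zpow a b (Tmat a b) (- y)) (op_mult a b (psis_gen a b k) (op_zpow a b (Tmat a b) y))"
    by (simp_all add: psiW_h psisW_h cnjT_def)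
next
  fix z1 z2 v p assume cp: "corner_pair a b z1 z2 v p"
  from cp_class[OF cp] obtain k y X Y where kyXY: "a \<le> k" "k < b" "p = fpt k y" "v = vtx X Y" "X = k \<or> X = k + 1" "Y = y \<or> Y = y + 1"
     "z1 = hpt k Y \<or> z1 = vpt X y" "z2 = hpt k Y \<or> z2 = vpt X y" by blast
  have W: "op_add (psiW a b (hpt k Y)) (op_scale (\<i> * complex_of_real (cmod (v - p)) / (v - p)) (psisW a b (hpt k Y)))
       = op_add (psiW a b (vpt X y)) (op_scale (\<i> * complex_of_real (cmod (v - p)) / (v - p)) (psisW a b (vpt X y)))"
    unfolding kyXY(3,4) by (rule W_all[OF ab kyXY(1,2,5,6)])
  show "op_add (psiW a b z1) (op_scale (\<i> * complex_of_real (cmod (v - p)) / (v - p)) (psisW a b z1)) =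
        op_add (psiW a b z2) (op_scale (\<i> * complex_of_real (cmod (v - p)) / (v - p)) (psisW a b z2))"
    using kyXY(7,8) W by auto
next
  fix y :: int
  have aa: "a \<le> a" "a \<le> b" using ab by auto
  show "op_add (psiW a b (vpt a y)) (op_scale \<i> (psisW a b (vpt a y))) = op_zero"
    unfolding psiW_v[OF aa] psisW_v[OF aa] add_conj op_zero_def
    using R5 by (subst lc_zero) (auto simp: cnjT_zero)
next
  fix y :: int
  have bb: "a \<le> b" "b \<le> b" using ab by auto
  show "op_add (psiW a b (vpt b y)) (op_scale (- \<i>) (psisW a b (vpt b y))) = op_zero"
    unfolding psiW_v[OF bb] psisW_v[OF bb] add_conj op_zero_def
    using R6[OF ab] by (subst lc_zero) (auto simp: cnjT_zero)
qed

end


context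
  fixes a b :: int
  assumes ab: "a < b"
begin

lemma fc_unique:
  assumes F1: "fermion_conds a b f g" and F2: "fermion_conds a b f' g'"
  shows "f = f' \<and> g = g'"
proof -
  have Z1: "\<And>z. \<not> edge a b z \<Longrightarrow> f z = op_zero \<and> g z = op_zero" using F1 unfolding fermion_conds_def by blast
  have Z2: "\<And>z. \<not> edge a b z \<Longrightarrow> f' z = op_zero \<and> g' z = op_zero" using F2 unfolding fermion_conds_def by blast
  have H1: "\<And>k y. a \<le> k \<Longrightarrow> k < b \<Longrightarrow> f (hpt k y) = f' (hpt k y) \<and> g (hpt k y) = g' (hpt k y)"
  proof -
    fix k y :: int assume "a \<le> k" "k < b"
    then show "f (hpt k y) = f' (hpt k y) \<and> g (hpt k y) = g' (hpt k y)"
      using F1 F2 unfolding fermion_conds_def by auto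
  qed
  have C1: "\<And>z1 z2 v p. corner_pair a b z1 z2 v p \<Longrightarrow>
        op_add (f z1) (op_scale (\<i> * of_real (cmod (v - p)) / (v - p)) (g z1)) =
        op_add (f z2) (op_scale (\<i> * of_real (cmod (v - p)) / (v - p)) (g z2))"
    using F1 unfolding fermion_conds_def by blast
  have C2: "\<And>z1 z2 v p. corner_pair a b z1 z2 v p \<Longrightarrow>
        op_add (f' z1) (op_scale (\<i> * of_real (cmod (v - p)) / (v - p)) (g' z1)) =
        op_add (f' z2) (op_scale (\<i> * of_real (cmod (v - p)) / (v - p)) (g' z2))"
    using F2 unfolding fermion_conds_def by blast
  have "f z = f' z \<and> g z = g' z" for z
  proof (cases "edge a b z")
    case False then show ?thesis using Z1 Z2 by simp
  next
    case True
    then consider (h) k y where "a \<le> k" "k < b" "z = hpt k y" | (v) x y where "a \<le> x" "x \<le> b" "z = vpt x y"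
      unfolding edge_def hedge_def vedge_def by blast
    then show ?thesis
    proof cases
      case h then show ?thesis using H1 by simp
    next
      case v
      define k where "k = (if x < b then x else x - 1)"
      have k: "a \<le> k" "k < b" "x = k \<or> x = k + 1" using v ab unfolding k_def by auto
      let ?e1 = "\<i> * of_real (cmod (vtx x y - fpt k y)) / (vtx x y - fpt k y)"
      let ?e2 = "\<i> * of_real (cmod (vtx x (y+1) - fpt k y)) / (vtx x (y+1) - fpt k y)"
      have cp1: "corner_pair a b (hpt k y) (vpt x y) (vtx x y) (fpt k y)" by (rule cp_explicit) (use k in auto)
      have cp2: "corner_pair a b (hpt k (y+1)) (vpt x y) (vtx x (y+1)) (fpt k y)" by (rule cp_explicit) (use k in auto)
      have ne: "?e1 \<noteq> ?e2" using k(3) eta_ne eta_BL eta_TL eta_BR eta_TR by auto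
      have hh1: "f (hpt k y) = f' (hpt k y)" "g (hpt k y) = g' (hpt k y)" using H1 k by auto
      have hh2: "f (hpt k (y+1)) = f' (hpt k (y+1))" "g (hpt k (y+1)) = g' (hpt k (y+1))" using H1[OF k(1,2), of "y+1"] by auto
      have pt: "f (vpt x y) \<tau> \<rho> = f' (vpt x y) \<tau> \<rho> \<and> g (vpt x y) \<tau> \<rho> = g' (vpt x y) \<tau> \<rho>" for \<tau> \<rho>
      proof (rule lin2)
        have "f (vpt x y) \<tau> \<rho> + ?e1 * g (vpt x y) \<tau> \<rho> = f (hpt k y) \<tau> \<rho> + ?e1 * g (hpt k y) \<tau> \<rho>"
          using fun_cong[OF fun_cong[OF C1[OF cp1]], of \<tau> \<rho>] unfolding op_add_def op_scale_def by simp
        also have "\<dots> = f' (vpt x y) \<tau> \<rho> + ?e1 * g' (vpt x y) \<tau> \<rho>"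
          using fun_cong[OF fun_cong[OF C2[OF cp1]], of \<tau> \<rho>] hh1 unfolding op_add_def op_scale_def by simp
        finally show "f (vpt x y) \<tau> \<rho> + ?e1 * g (vpt x y) \<tau> \<rho> = f' (vpt x y) \<tau> \<rho> + ?e1 * g' (vpt x y) \<tau> \<rho>" .
        have "f (vpt x y) \<tau> \<rho> + ?e2 * g (vpt x y) \<tau> \<rho> = f (hpt k (y+1)) \<tau> \<rho> + ?e2 * g (hpt k (y+1)) \<tau> \<rho>"
          using fun_cong[OF fun_cong[OF C1[OF cp2]], of \<tau> \<rho>] unfolding op_add_def op_scale_def by simp
        also have "\<dots> = f' (vpt x y) \<tau> \<rho> + ?e2 * g' (vpt x y) \<tau> \<rho>"
          using fun_cong[OF fun_cong[OF C2[OF cp2]], of \<tau> \<rho>] hh2 unfolding op_add_def op_scale_def by simp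
        finally show "f (vpt x y) \<tau> \<rho> + ?e2 * g (vpt x y) \<tau> \<rho> = f' (vpt x y) \<tau> \<rho> + ?e2 * g' (vpt x y) \<tau> \<rho>" .
        show "?e1 \<noteq> ?e2" by (rule ne)
      qed
      then show ?thesis unfolding v(3) by (auto simp: fun_eq_iff)
    qed
  qed
  then show ?thesis by (auto simp: fun_eq_iff)
qed

lemma fermions_eq: "fermions a b = (psiW a b, psisW a b)"
  unfolding fermions_def
proof (rule the_equality)
  show "fermion_conds a b (fst (psiW a b, psisW a b)) (snd (psiW a b, psisW a b))"
    using fc_exists[OF ab] by simp
next
  fix fg assume "fermion_conds a b (fst fg) (snd fg)"
  then have "fst fg = psiW a b \<and> snd fg = psisW a b" using fc_unique fc_exists[OF ab] by blast
  then show "fg = (psiW a b, psisW a b)" by (simp add: prod_eq_iff)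
qed

lemma fermions_conds: "fermion_conds a b (fst (fermions a b)) (snd (fermions a b))"
  unfolding fermions_eq using fc_exists[OF ab] by simp

end


lemma solve_div: "(D::complex) \<noteq> 0 \<Longrightarrow> X = D * v \<Longrightarrow> v = X / D" by simp

lemma alg_closed:
  fixes fb gb fr gr ft gt fl gl mb nb mr nr mt nt ml nl :: complex
  assumes BL: "fb + etaBL * gb = fl + etaBL * gl" "mb - etaBL * nb = ml - etaBL * nl"
    and BR: "fb + etaBR * gb = fr + etaBR * gr" "mb - etaBR * nb = mr - etaBR * nr"
    and TL: "ft + etaTL * gt = fl + etaTL * gl" "mt - etaTL * nt = ml - etaTL * nl"
    and TR: "ft + etaTR * gt = fr + etaTR * gr" "mt - etaTR * nt = mr - etaTR * nr"
  shows "mb * fb + nb * gb + mr * fr * \<i> + nr * gr * (- \<i>) + mt * ft * (- 1) + nt * gt * (- 1)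
       + ml * fl * (- \<i>) + nl * gl * \<i> = 0"
proof -
  have eBR: "etaBR - etaTR = - 2 / s2" and eBL: "etaBL - etaTL = - 2 / s2"
    unfolding etaBR_def etaTR_def etaBL_def etaTL_def by (simp_all add: field_simps)
  have nz: "etaBR - etaTR \<noteq> 0" "etaBL - etaTL \<noteq> 0" unfolding eBR eBL by simp_all
  have gr: "gr = ((fb + etaBR * gb) - (ft + etaTR * gt)) / (etaBR - etaTR)"
  proof -
    have "(fb + etaBR * gb) - (ft + etaTR * gt) = (etaBR - etaTR) * gr" unfolding BR(1) TR(1) by (simp add: algebra_simps)
    then show ?thesis using nz by (intro solve_div) (simp_all add: algebra_simps)
  qed
  have fr: "fr = fb + etaBR * gb - etaBR * gr" using BR(1) by (simp add: algebra_simps)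
  have gl: "gl = ((fb + etaBL * gb) - (ft + etaTL * gt)) / (etaBL - etaTL)"
  proof -
    have "(fb + etaBL * gb) - (ft + etaTL * gt) = (etaBL - etaTL) * gl" unfolding BL(1) TL(1) by (simp add: algebra_simps)
    then show ?thesis using nz by (intro solve_div) (simp_all add: algebra_simps)
  qed
  have fl: "fl = fb + etaBL * gb - etaBL * gl" using BL(1) by (simp add: algebra_simps)
  have nr: "nr = - ((mb - etaBR * nb) - (mt - etaTR * nt)) / (etaBR - etaTR)"
  proof -
    have "(mb - etaBR * nb) - (mt - etaTR * nt) = - (etaBR - etaTR) * nr" unfolding BR(2) TR(2) by (simp add: algebra_simps)
    then show ?thesis using nz by (intro solve_div) (simp_all add: algebra_simps)
  qed
  have mr: "mr = mb - etaBR * nb + etaBR * nr" using BR(2) by (simp add: algebra_simps)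
  have nl: "nl = - ((mb - etaBL * nb) - (mt - etaTL * nt)) / (etaBL - etaTL)"
  proof -
    have "(mb - etaBL * nb) - (mt - etaTL * nt) = - (etaBL - etaTL) * nl" unfolding BL(2) TL(2) by (simp add: algebra_simps)
    then show ?thesis using nz by (intro solve_div) (simp_all add: algebra_simps)
  qed
  have ml: "ml = mb - etaBL * nb + etaBL * nl" using BL(2) by (simp add: algebra_simps)
  show ?thesis unfolding fr fl mr ml unfolding gr gl nr nl eBR eBL
    unfolding etaBR_def etaTR_def etaBL_def etaTL_def
    by (simp add: field_simps s2sq s2s2' s2pow2 s2cube s2pow4)
qed


lemma ipow_mod: "\<i> ^ n = \<i> ^ (n mod 4)"
proof -
  have h: "\<i> ^ 4 = (1::complex)" by (simp add: numeral_eq_Suc)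
  have "\<i> ^ n = \<i> ^ (4 * (n div 4) + n mod 4)" by simp
  also have "\<dots> = (\<i> ^ 4) ^ (n div 4) * \<i> ^ (n mod 4)" by (simp only: power_add power_mult)
  also have "\<dots> = \<i> ^ (n mod 4)" by (simp add: h)
  finally show ?thesis .
qed

definition cw :: "complex \<Rightarrow> nat \<Rightarrow> complex" where "cw p q = p - (1 + \<i>) / 2 * \<i> ^ q"

definition Hq :: "(complex \<Rightarrow> complex) \<Rightarrow> (complex \<Rightarrow> complex) \<Rightarrow> (complex \<Rightarrow> complex) \<Rightarrow> (complex \<Rightarrow> complex) \<Rightarrow> complex \<Rightarrow> nat \<Rightarrow> complex" where
  "Hq m ms f g p q = m ((cw p q + cw p (Suc q mod 4)) / 2) * f ((cw p q + cw p (Suc q mod 4)) / 2) * (cw p (Suc q mod 4) - cw p q)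
     + ms ((cw p q + cw p (Suc q mod 4)) / 2) * g ((cw p q + cw p (Suc q mod 4)) / 2) * cnj (cw p (Suc q mod 4) - cw p q)"

lemma plaq_w_cw: "plaq_w p r j = cw p ((j + r) mod 4)"
  unfolding plaq_w_def cw_def by (subst ipow_mod) simp

lemma plaq_Hq:
  "plaquette_integral m ms \<psi> \<psi>s p r \<tau> \<rho> = (\<Sum>j\<in>{1..4::nat}. Hq m ms (\<lambda>z. \<psi> z \<tau> \<rho>) (\<lambda>z. \<psi>s z \<tau> \<rho>) p ((j - 1 + r) mod 4))"
  unfolding plaquette_integral_def
proof (intro sum.cong refl)
  fix j :: nat assume "j \<in> {1..4}"
  then have j: "j \<ge> 1" by simp
  have e1: "plaq_w p r (j - 1) = cw p ((j - 1 + r) mod 4)" by (rule plaq_w_cw)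
  have e2: "plaq_w p r j = cw p (Suc ((j - 1 + r) mod 4) mod 4)"
    unfolding plaq_w_cw using j by (simp add: mod_Suc_eq Suc_diff_le)
  show "m (plaq_z p r j) * \<psi> (plaq_z p r j) \<tau> \<rho> * (plaq_w p r j - plaq_w p r (j - 1)) +
        ms (plaq_z p r j) * \<psi>s (plaq_z p r j) \<tau> \<rho> * cnj (plaq_w p r j - plaq_w p r (j - 1)) =
        Hq m ms (\<lambda>z. \<psi> z \<tau> \<rho>) (\<lambda>z. \<psi>s z \<tau> \<rho>) p ((j - 1 + r) mod 4)"
    unfolding Hq_def plaq_z_def e1 e2 ..
qed

lemma sum14: "(\<Sum>j\<in>{1..4::nat}. F j) = F 1 + F 2 + F 3 + (F 4 :: complex)"
  by (simp add: numeral_eq_Suc add.assoc)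

lemma plaq_sum:
  assumes "r < 4"
  shows "plaquette_integral m ms \<psi> \<psi>s p r \<tau> \<rho> =
     Hq m ms (\<lambda>z. \<psi> z \<tau> \<rho>) (\<lambda>z. \<psi>s z \<tau> \<rho>) p 0 + Hq m ms (\<lambda>z. \<psi> z \<tau> \<rho>) (\<lambda>z. \<psi>s z \<tau> \<rho>) p 1
   + Hq m ms (\<lambda>z. \<psi> z \<tau> \<rho>) (\<lambda>z. \<psi>s z \<tau> \<rho>) p 2 + Hq m ms (\<lambda>z. \<psi> z \<tau> \<rho>) (\<lambda>z. \<psi>s z \<tau> \<rho>) p 3"
proof -
  let ?H = "Hq m ms (\<lambda>z. \<psi> z \<tau> \<rho>) (\<lambda>z. \<psi>s z \<tau> \<rho>) p"
  have "r = 0 \<or> r = 1 \<or> r = 2 \<or> r = 3" using assms by auto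
  then show ?thesis unfolding plaq_Hq sum14
  proof (elim disjE)
    assume r: "r = 0"
    have e: "((1::nat) - 1 + r) mod 4 = 0" "((2::nat) - 1 + r) mod 4 = 1" "((3::nat) - 1 + r) mod 4 = 2" "((4::nat) - 1 + r) mod 4 = 3"
      unfolding r by simp_all
    show "?H ((1 - 1 + r) mod 4) + ?H ((2 - 1 + r) mod 4) + ?H ((3 - 1 + r) mod 4) + ?H ((4 - 1 + r) mod 4) = ?H 0 + ?H 1 + ?H 2 + ?H 3"
      unfolding e ..
  next
    assume r: "r = 1"
    have e: "((1::nat) - 1 + r) mod 4 = 1" "((2::nat) - 1 + r) mod 4 = 2" "((3::nat) - 1 + r) mod 4 = 3" "((4::nat) - 1 + r) mod 4 = 0"
      unfolding r by simp_all
    show "?H ((1 - 1 + r) mod 4) + ?H ((2 - 1 + r) mod 4) + ?H ((3 - 1 + r) mod 4) + ?H ((4 - 1 + r) mod 4) = ?H 0 + ?H 1 + ?H 2 + ?H 3"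
      unfolding e by (simp only: add.assoc add.commute add.left_commute)
  next
    assume r: "r = 2"
    have e: "((1::nat) - 1 + r) mod 4 = 2" "((2::nat) - 1 + r) mod 4 = 3" "((3::nat) - 1 + r) mod 4 = 0" "((4::nat) - 1 + r) mod 4 = 1"
      unfolding r by simp_all
    show "?H ((1 - 1 + r) mod 4) + ?H ((2 - 1 + r) mod 4) + ?H ((3 - 1 + r) mod 4) + ?H ((4 - 1 + r) mod 4) = ?H 0 + ?H 1 + ?H 2 + ?H 3"
      unfolding e by (simp only: add.assoc add.commute add.left_commute)
  next
    assume r: "r = 3"
    have e: "((1::nat) - 1 + r) mod 4 = 3" "((2::nat) - 1 + r) mod 4 = 0" "((3::nat) - 1 + r) mod 4 = 1" "((4::nat) - 1 + r) mod 4 = 2"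
      unfolding r by simp_all
    show "?H ((1 - 1 + r) mod 4) + ?H ((2 - 1 + r) mod 4) + ?H ((3 - 1 + r) mod 4) + ?H ((4 - 1 + r) mod 4) = ?H 0 + ?H 1 + ?H 2 + ?H 3"
      unfolding e by (simp only: add.assoc add.commute add.left_commute)
  qed
qed

lemma cw_vals: "cw (fpt k y) 0 = vtx k y" "cw (fpt k y) 1 = vtx (k+1) y" "cw (fpt k y) 2 = vtx (k+1) (y+1)" "cw (fpt k y) 3 = vtx k (y+1)"
  unfolding cw_def by (simp_all add: complex_eq_iff numeral_eq_Suc)

lemma Hq_vals:
  "Hq m ms f g (fpt k y) 0 = m (hpt k y) * f (hpt k y) * 1 + ms (hpt k y) * g (hpt k y) * 1"
  "Hq m ms f g (fpt k y) 1 = m (vpt (k+1) y) * f (vpt (k+1) y) * \<i> + ms (vpt (k+1) y) * g (vpt (k+1) y) * (- \<i>)"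
  "Hq m ms f g (fpt k y) 2 = m (hpt k (y+1)) * f (hpt k (y+1)) * (- 1) + ms (hpt k (y+1)) * g (hpt k (y+1)) * (- 1)"
  "Hq m ms f g (fpt k y) 3 = m (vpt k y) * f (vpt k y) * (- \<i>) + ms (vpt k y) * g (vpt k y) * \<i>"
proof -
  have m0: "(vtx k y + vtx (k+1) y) / 2 = hpt k y" "vtx (k+1) y - vtx k y = 1" by (simp_all add: complex_eq_iff)
  have m1: "(vtx (k+1) y + vtx (k+1) (y+1)) / 2 = vpt (k+1) y" "vtx (k+1) (y+1) - vtx (k+1) y = \<i>" "cnj \<i> = - \<i>" by (simp_all add: complex_eq_iff)
  have m2: "(vtx (k+1) (y+1) + vtx k (y+1)) / 2 = hpt k (y+1)" "vtx k (y+1) - vtx (k+1) (y+1) = - 1" by (simp_all add: complex_eq_iff)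
  have m3: "(vtx k (y+1) + vtx k y) / 2 = vpt k y" "vtx k y - vtx k (y+1) = - \<i>" by (simp_all add: complex_eq_iff)
  have s: "Suc 0 mod 4 = 1" "Suc 1 mod 4 = 2" "Suc 2 mod 4 = 3" "Suc 3 mod 4 = 0" by simp_all
  show "Hq m ms f g (fpt k y) 0 = m (hpt k y) * f (hpt k y) * 1 + ms (hpt k y) * g (hpt k y) * 1"
    unfolding Hq_def s cw_vals m0 by simp
  show "Hq m ms f g (fpt k y) 1 = m (vpt (k+1) y) * f (vpt (k+1) y) * \<i> + ms (vpt (k+1) y) * g (vpt (k+1) y) * (- \<i>)"
    unfolding Hq_def s cw_vals m1 ..
  show "Hq m ms f g (fpt k y) 2 = m (hpt k (y+1)) * f (hpt k (y+1)) * (- 1) + ms (hpt k (y+1)) * g (hpt k (y+1)) * (- 1)"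
    unfolding Hq_def s cw_vals m2 by simp
  show "Hq m ms f g (fpt k y) 3 = m (vpt k y) * f (vpt k y) * (- \<i>) + ms (vpt k y) * g (vpt k y) * \<i>"
    unfolding Hq_def s cw_vals m3 by simp
qed


lemma corner_pointwise:
  assumes "op_add (f z1) (op_scale \<eta> (g z1)) = op_add (f z2) (op_scale \<eta> (g z2))"
  shows "f z1 \<tau> \<rho> + \<eta> * g z1 \<tau> \<rho> = f z2 \<tau> \<rho> + \<eta> * g z2 \<tau> \<rho>"
  using fun_cong[OF fun_cong[OF assms], of \<tau> \<rho>] unfolding op_add_def op_scale_def .

theorem proposition3p8:
  fixes a b :: int and m ms :: "complex \<Rightarrow> complex"
  assumes "a < 0" and "0 < b" and "ICSH a b m ms"
  shows "closed_form a b m ms (fst (fermions a b)) (snd (fermions a b))"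
proof -
  have ab: "a < b" using assms by simp
  define \<psi> where "\<psi> = fst (fermions a b)"
  define \<psi>s where "\<psi>s = snd (fermions a b)"
  have FC: "fermion_conds a b \<psi> \<psi>s" unfolding \<psi>_def \<psi>s_def by (rule fermions_conds[OF ab])
  have C: "\<And>z1 z2 v p. corner_pair a b z1 z2 v p \<Longrightarrow>
        op_add (\<psi> z1) (op_scale (\<i> * of_real (cmod (v - p)) / (v - p)) (\<psi>s z1)) =
        op_add (\<psi> z2) (op_scale (\<i> * of_real (cmod (v - p)) / (v - p)) (\<psi>s z2))"
    using FC unfolding fermion_conds_def by blast
  have I: "\<And>z1 z2 v p. corner_pair a b z1 z2 v p \<Longrightarrow>
      m z1 - \<i> * of_real (cmod (v - p)) / (v - p) * ms z1 = m z2 - \<i> * of_real (cmod (v - p)) / (v - p) * ms z2"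
    using assms(3) unfolding ICSH_def by blast
  show ?thesis unfolding closed_form_def \<psi>_def[symmetric] \<psi>s_def[symmetric]
  proof (intro allI impI)
    fix p :: complex and r :: nat assume pr: "face a b p \<and> r < 4"
    then obtain k y where k: "a \<le> k" "k < b" and p: "p = fpt k y" unfolding face_def by auto
    have cBL: "corner_pair a b (hpt k y) (vpt k y) (vtx k y) (fpt k y)" by (rule cp_explicit) (use k in auto)
    have cBR: "corner_pair a b (hpt k y) (vpt (k+1) y) (vtx (k+1) y) (fpt k y)" by (rule cp_explicit) (use k in auto)
    have cTL: "corner_pair a b (hpt k (y+1)) (vpt k y) (vtx k (y+1)) (fpt k y)" by (rule cp_explicit) (use k in auto)
    have cTR: "corner_pair a b (hpt k (y+1)) (vpt (k+1) y) (vtx (k+1) (y+1)) (fpt k y)" by (rule cp_explicit) (use k in auto)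
    show "plaquette_integral m ms \<psi> \<psi>s p r = op_zero"
    proof (intro ext)
      fix \<tau> \<rho>
      have BL1: "\<psi> (hpt k y) \<tau> \<rho> + etaBL * \<psi>s (hpt k y) \<tau> \<rho> = \<psi> (vpt k y) \<tau> \<rho> + etaBL * \<psi>s (vpt k y) \<tau> \<rho>"
        using corner_pointwise[OF C[OF cBL]] unfolding eta_BL .
      have BL2: "m (hpt k y) - etaBL * ms (hpt k y) = m (vpt k y) - etaBL * ms (vpt k y)"
        using I[OF cBL] unfolding eta_BL .
      have BR1: "\<psi> (hpt k y) \<tau> \<rho> + etaBR * \<psi>s (hpt k y) \<tau> \<rho> = \<psi> (vpt (k+1) y) \<tau> \<rho> + etaBR * \<psi>s (vpt (k+1) y) \<tau> \<rho>"
        using corner_pointwise[OF C[OF cBR]] unfolding eta_BR .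
      have BR2: "m (hpt k y) - etaBR * ms (hpt k y) = m (vpt (k+1) y) - etaBR * ms (vpt (k+1) y)"
        using I[OF cBR] unfolding eta_BR .
      have TL1: "\<psi> (hpt k (y+1)) \<tau> \<rho> + etaTL * \<psi>s (hpt k (y+1)) \<tau> \<rho> = \<psi> (vpt k y) \<tau> \<rho> + etaTL * \<psi>s (vpt k y) \<tau> \<rho>"
        using corner_pointwise[OF C[OF cTL]] unfolding eta_TL .
      have TL2: "m (hpt k (y+1)) - etaTL * ms (hpt k (y+1)) = m (vpt k y) - etaTL * ms (vpt k y)"
        using I[OF cTL] unfolding eta_TL .
      have TR1: "\<psi> (hpt k (y+1)) \<tau> \<rho> + etaTR * \<psi>s (hpt k (y+1)) \<tau> \<rho> = \<psi> (vpt (k+1) y) \<tau> \<rho> + etaTR * \<psi>s (vpt (k+1) y) \<tau> \<rho>"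
        using corner_pointwise[OF C[OF cTR]] unfolding eta_TR .
      have TR2: "m (hpt k (y+1)) - etaTR * ms (hpt k (y+1)) = m (vpt (k+1) y) - etaTR * ms (vpt (k+1) y)"
        using I[OF cTR] unfolding eta_TR .
      have Z: "m (hpt k y) * \<psi> (hpt k y) \<tau> \<rho> + ms (hpt k y) * \<psi>s (hpt k y) \<tau> \<rho>
        + m (vpt (k+1) y) * \<psi> (vpt (k+1) y) \<tau> \<rho> * \<i> + ms (vpt (k+1) y) * \<psi>s (vpt (k+1) y) \<tau> \<rho> * (- \<i>)
        + m (hpt k (y+1)) * \<psi> (hpt k (y+1)) \<tau> \<rho> * (- 1) + ms (hpt k (y+1)) * \<psi>s (hpt k (y+1)) \<tau> \<rho> * (- 1)
        + m (vpt k y) * \<psi> (vpt k y) \<tau> \<rho> * (- \<i>) + ms (vpt k y) * \<psi>s (vpt k y) \<tau> \<rho> * \<i> = 0"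
        by (rule alg_closed[OF BL1 BL2 BR1 BR2 TL1 TL2 TR1 TR2])
      have "plaquette_integral m ms \<psi> \<psi>s p r \<tau> \<rho> =
         Hq m ms (\<lambda>z. \<psi> z \<tau> \<rho>) (\<lambda>z. \<psi>s z \<tau> \<rho>) (fpt k y) 0 + Hq m ms (\<lambda>z. \<psi> z \<tau> \<rho>) (\<lambda>z. \<psi>s z \<tau> \<rho>) (fpt k y) 1
       + Hq m ms (\<lambda>z. \<psi> z \<tau> \<rho>) (\<lambda>z. \<psi>s z \<tau> \<rho>) (fpt k y) 2 + Hq m ms (\<lambda>z. \<psi> z \<tau> \<rho>) (\<lambda>z. \<psi>s z \<tau> \<rho>) (fpt k y) 3"
        unfolding p using pr by (intro plaq_sum) simp
      also have "\<dots> = 0" unfolding Hq_vals using Z by (simp add: algebra_simps)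
      finally show "plaquette_integral m ms \<psi> \<psi>s p r \<tau> \<rho> = op_zero \<tau> \<rho>" unfolding op_zero_def by simp
    qed
  qed
qed


end
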